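(* Let $\Gamma=\langle S|R\rangle$ be a Coxeter group with its standard Coxeter generating set $S$. The word metric on $\Gamma$ with respect to $S$ is conditionally strictly negative definite if and only if $\Gamma$ is a free Coxeter group, i.e. $\Gamma=\ast_{i=1}^n\mathbb{Z}/2\mathbb{Z}$ (all coefficients $m_{s,t}=\infty$). Let $\Gamma=\langle S|R\rangle$ be an Artin group with its standard generating set $S$. The word metric on $\Gamma$ with respect to $S$ is conditionally strictly negative definite if and only if $\Gamma$ is a free group, i.e. $\Gamma=\ast_{i=1}^n\mathbb{Z}$ (all coefficients $m_{s,t}=\infty$).
   Context: A hermitian kernel $K\colon X\times X\to\mathbb{C}$ is conditionally strictly negative definite if $\sum_{x,y\in X}\lambda(x)\overline{\lambda(y)}K(x,y)<0$ for every nonzero finitely supported $\lambda\colon X\to\mathbb{C}$ with $\sum_{x}\lambda(x)=0$. For a semigroup element pair $s,t$ and $k\in\mathbb{N}$, the alternating product $\langle s,t\rangle^k$ denotes the word $stst\ldots$ of length $k$ starting with $s$. Given a set $S$ and coefficients $m_{s,t}=m_{t,s}\in\{2,3,\ldots\}\cup\{\infty\}$ for $s\neq t\in S$, the Artin group is $\langle S\mid \langle s,t\rangle^{m_{s,t}}=\langle t,s\rangle^{m_{s,t}}\ (s\neq t)\rangle$, where $m_{s,t}=\infty$ means no such relation is imposed; the corresponding Coxeter group is its quotient by the normal subgroup generated by $\{s^2:s\in S\}$. The word metric is the path metric on the Cayley graph with respect to $S$. *)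

theory Defs
  imports Complex_Main "HOL-Library.Extended_Nat"
begin

text \<open>Words in a free monoid on letters S and their formal inverses:
  (s, True) stands for s, (s, False) for s^-1.\<close>
type_synonym 'a word = "('a \<times> bool) list"

definition word_over :: "'a set \<Rightarrow> 'a word \<Rightarrow> bool" where
  "word_over S w \<longleftrightarrow> fst ` set w \<subseteq> S"

inductive pres_eq :: "('a word \<times> 'a word) set \<Rightarrow> 'a word \<Rightarrow> 'a word \<Rightarrow> bool"
  for R where
  refl: "pres_eq R w w"
| sym: "pres_eq R u v \<Longrightarrow> pres_eq R v u"
| trans: "pres_eq R u v \<Longrightarrow> pres_eq R v w \<Longrightarrow> pres_eq R u w"
| cancel: "pres_eq R (u @ [(s, b), (s, \<not> b)] @ v) (u @ v)"
| rel: "(l, r) \<in> R \<Longrightarrow> pres_eq R (u @ l @ v) (u @ r @ v)"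

definition group_elems :: "('a word \<times> 'a word) set \<Rightarrow> 'a set \<Rightarrow> 'a word set set" where
  "group_elems R S = {{v. word_over S v \<and> pres_eq R u v} | u. word_over S u}"

definition word_dist :: "('a word \<times> 'a word) set \<Rightarrow> 'a set \<Rightarrow> 'a word set \<Rightarrow> 'a word set \<Rightarrow> nat" where
  "word_dist R S g h = (LEAST n. \<exists>u\<in>g. \<exists>v\<in>h. \<exists>w. word_over S w \<and> length w = n \<and> pres_eq R (u @ w) v)"

fun alt :: "'a \<Rightarrow> 'a \<Rightarrow> nat \<Rightarrow> 'a word" where
  "alt s t 0 = []"
| "alt s t (Suc k) = (s, True) # alt t s k"

definition coxeter_matrix :: "'a set \<Rightarrow> ('a \<Rightarrow> 'a \<Rightarrow> enat) \<Rightarrow> bool" where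
  "coxeter_matrix S m \<longleftrightarrow> (\<forall>s\<in>S. \<forall>t\<in>S. s \<noteq> t \<longrightarrow> m s t = m t s \<and> m s t \<ge> 2)"

definition artin_rels :: "'a set \<Rightarrow> ('a \<Rightarrow> 'a \<Rightarrow> enat) \<Rightarrow> ('a word \<times> 'a word) set" where
  "artin_rels S m = {(alt s t k, alt t s k) | s t k. s \<in> S \<and> t \<in> S \<and> s \<noteq> t \<and> m s t = enat k}"

definition coxeter_rels :: "'a set \<Rightarrow> ('a \<Rightarrow> 'a \<Rightarrow> enat) \<Rightarrow> ('a word \<times> 'a word) set" where
  "coxeter_rels S m = artin_rels S m \<union> {([(s, True), (s, True)], []) | s. s \<in> S}"

definition cond_strict_neg_def :: "'x set \<Rightarrow> ('x \<Rightarrow> 'x \<Rightarrow> complex) \<Rightarrow> bool" where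
  "cond_strict_neg_def X K \<longleftrightarrow>
     (\<forall>c :: 'x \<Rightarrow> complex.
        finite {x. c x \<noteq> 0} \<and> {x. c x \<noteq> 0} \<subseteq> X \<and> {x. c x \<noteq> 0} \<noteq> {}
        \<and> (\<Sum>x\<in>{x. c x \<noteq> 0}. c x) = 0 \<longrightarrow>
        (let q = (\<Sum>x\<in>{x. c x \<noteq> 0}. \<Sum>y\<in>{x. c x \<noteq> 0}. c x * cnj (c y) * K x y)
         in q \<in> \<real> \<and> Re q < 0))"

end

theory Submission
  imports Defs
begin


lemma pe_ctx: "pres_eq R x y \<Longrightarrow> pres_eq R (u @ x @ v) (u @ y @ v)"
proof (induction rule: pres_eq.induct)
  case (refl w) then show ?case by (rule pres_eq.refl)
next
  case (sym a b) then show ?case by (metis pres_eq.sym)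
next
  case (trans a b c) then show ?case by (metis pres_eq.trans)
next
  case (cancel u' s b v')
  have "pres_eq R ((u @ u') @ [(s, b), (s, \<not> b)] @ (v' @ v)) ((u @ u') @ (v' @ v))"
    by (rule pres_eq.cancel)
  then show ?case by simp
next
  case (rel l r u' v')
  have "pres_eq R ((u @ u') @ l @ (v' @ v)) ((u @ u') @ r @ (v' @ v))"
    using rel by (rule pres_eq.rel)
  then show ?case by simp
qed

lemma pe_sym: "pres_eq R x y \<Longrightarrow> pres_eq R y x" by (rule pres_eq.sym)
lemma pe_trans[trans]: "pres_eq R x y \<Longrightarrow> pres_eq R y z \<Longrightarrow> pres_eq R x z" by (rule pres_eq.trans)
lemma pe_refl[simp]: "pres_eq R x x" by (rule pres_eq.refl)

lemma pe_app: "pres_eq R x x' \<Longrightarrow> pres_eq R y y' \<Longrightarrow> pres_eq R (x @ y) (x' @ y')"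
proof -
  assume a: "pres_eq R x x'" and b: "pres_eq R y y'"
  have "pres_eq R ([] @ x @ y) ([] @ x' @ y)" using pe_ctx[OF a] .
  moreover have "pres_eq R (x' @ y @ []) (x' @ y' @ [])" using pe_ctx[OF b] .
  ultimately show ?thesis by (metis pe_trans append_Nil append_Nil2)
qed

lemma pe_appL: "pres_eq R y y' \<Longrightarrow> pres_eq R (x @ y) (x @ y')" by (simp add: pe_app)
lemma pe_appR: "pres_eq R x x' \<Longrightarrow> pres_eq R (x @ y) (x' @ y)" by (simp add: pe_app)

lemma pe_mono: "pres_eq R x y \<Longrightarrow> R \<subseteq> R' \<Longrightarrow> pres_eq R' x y"
proof (induction rule: pres_eq.induct)
  case (refl w) then show ?case by simp
next
  case (sym a b) then show ?case by (metis pres_eq.sym)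
next
  case (trans a b c) then show ?case by (metis pres_eq.trans)
next
  case (cancel u s b v) show ?case by (rule pres_eq.cancel)
next
  case (rel l r u v) then show ?case by (metis pres_eq.rel subsetD)
qed

definition il :: "'a \<times> bool \<Rightarrow> 'a \<times> bool" where "il a = (fst a, \<not> snd a)"
definition winv :: "'a word \<Rightarrow> 'a word" where "winv w = rev (map il w)"

lemma il_il[simp]: "il (il a) = a" by (simp add: il_def)
lemma fst_il[simp]: "fst (il a) = fst a" by (simp add: il_def)
lemma inv_Nil[simp]: "winv [] = []" by (simp add: winv_def)
lemma inv_Cons[simp]: "winv (a # w) = winv w @ [il a]" by (simp add: winv_def)
lemma inv_app[simp]: "winv (u @ v) = winv v @ winv u" by (simp add: winv_def)
lemma inv_inv[simp]: "winv (winv w) = w" by (simp add: winv_def rev_map[symmetric] o_def)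
lemma length_inv[simp]: "length (winv w) = length w" by (simp add: winv_def)
lemma word_over_inv[simp]: "word_over S (winv w) = word_over S w"
  by (simp add: word_over_def winv_def image_image)
lemma word_over_app[simp]: "word_over S (u @ v) = (word_over S u \<and> word_over S v)"
  by (auto simp: word_over_def)
lemma word_over_Cons[simp]: "word_over S (a # v) = (fst a \<in> S \<and> word_over S v)"
  by (auto simp: word_over_def)
lemma word_over_Nil[simp]: "word_over S []"
  by (auto simp: word_over_def)

lemma pe_cancel1: "pres_eq R [a, il a] []"
  using pres_eq.cancel[of R "[]" "fst a" "snd a" "[]"] by (cases a) (simp add: il_def)

lemma pe_rinv: "pres_eq R (w @ winv w) []"
proof (induction w)
  case Nil then show ?case by simp
next
  case (Cons a w)
  have "pres_eq R ([a] @ (w @ winv w) @ [il a]) ([a] @ [] @ [il a])"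
    using pe_ctx[OF Cons.IH] .
  also have "pres_eq R ([a] @ [] @ [il a]) []" using pe_cancel1 by simp
  finally show ?case by simp
qed

lemma pe_linv: "pres_eq R (winv w @ w) []"
  using pe_rinv[of R "winv w"] by simp

lemma pe_inv: "pres_eq R x y \<Longrightarrow> pres_eq R (winv x) (winv y)"
proof -
  assume xy: "pres_eq R x y"
  have "pres_eq R (winv x) (winv x @ y @ winv y)"
    using pe_appL[OF pe_sym[OF pe_rinv[of R y]], of "winv x"] by simp
  also have "pres_eq R (winv x @ y @ winv y) (winv x @ x @ winv y)"
    using pe_ctx[OF pe_sym[OF xy], of "winv x" "winv y"] .
  also have "pres_eq R (winv x @ x @ winv y) ([] @ winv y)"
    using pe_appR[OF pe_linv[of R x], of "winv y"] by simp
  finally show ?thesis by simp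
qed

lemma pe_cancel_left: "pres_eq R (u @ x) (u @ y) \<Longrightarrow> pres_eq R x y"
proof -
  assume h: "pres_eq R (u @ x) (u @ y)"
  have "pres_eq R x (winv u @ u @ x)" using pe_appR[OF pe_sym[OF pe_linv[of R u]], of x] by simp
  also have "pres_eq R (winv u @ u @ x) (winv u @ u @ y)" using pe_appL[OF h] by simp
  also have "pres_eq R (winv u @ u @ y) y" using pe_appR[OF pe_linv[of R u], of y] by simp
  finally show ?thesis .
qed

lemma pe_move: "pres_eq R (u @ w) v \<Longrightarrow> pres_eq R w (winv u @ v)"
proof -
  assume h: "pres_eq R (u @ w) v"
  have "pres_eq R w (winv u @ u @ w)" using pe_appR[OF pe_sym[OF pe_linv[of R u]], of w] by simp
  also have "pres_eq R (winv u @ u @ w) (winv u @ v)" using pe_appL[OF h] by simp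
  finally show ?thesis .
qed


fun cr :: "('b \<Rightarrow> 'b) \<Rightarrow> 'b \<Rightarrow> 'b list \<Rightarrow> 'b list" where
  "cr f a [] = [a]"
| "cr f a (b # w) = (if b = f a then w else a # b # w)"

fun red :: "('b \<Rightarrow> 'b) \<Rightarrow> 'b list \<Rightarrow> 'b list" where
  "red f [] = []"
| "red f (a # w) = cr f a (red f w)"

fun reduced :: "('b \<Rightarrow> 'b) \<Rightarrow> 'b list \<Rightarrow> bool" where
  "reduced f [] = True"
| "reduced f [a] = True"
| "reduced f (a # b # w) = (b \<noteq> f a \<and> reduced f (b # w))"

lemma reduced_tl: "reduced f (a # w) \<Longrightarrow> reduced f w"
  by (cases w) auto

lemma reduced_cr: "reduced f w \<Longrightarrow> reduced f (cr f a w)"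
  by (cases w) (auto dest: reduced_tl)

lemma reduced_red: "reduced f (red f w)"
  by (induction w) (auto intro: reduced_cr)

lemma red_reduced: "reduced f w \<Longrightarrow> red f w = w"
proof (induction w)
  case Nil then show ?case by simp
next
  case (Cons a w)
  then have "red f w = w" using Cons.IH Cons.prems reduced_tl by metis
  then show ?case using Cons.prems by (cases w) auto
qed

lemma red_red[simp]: "red f (red f w) = red f w"
  by (rule red_reduced[OF reduced_red])

lemma length_cr: "length (cr f a w) \<le> Suc (length w)"
  by (cases w) auto

lemma length_red: "length (red f w) \<le> length w"
proof (induction w)
  case (Cons a w) then show ?case using length_cr[of f a "red f w"] by simp
qed simp

fun lcp :: "'b list \<Rightarrow> 'b list \<Rightarrow> nat" where
  "lcp (a # x) (b # y) = (if a = b then Suc (lcp x y) else 0)"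
| "lcp _ _ = 0"

lemma lcp_le: "lcp x y \<le> length x" "lcp x y \<le> length y"
  by (induction x y rule: lcp.induct) auto

locale invol = fixes f :: "'b \<Rightarrow> 'b" assumes ff: "\<And>a. f (f a) = a"
begin

lemma cr_cancel: "reduced f w \<Longrightarrow> cr f a (cr f (f a) w) = w"
proof (cases w)
  case Nil then show ?thesis by simp
next
  case (Cons b w')
  assume r: "reduced f w"
  show ?thesis
  proof (cases "b = a")
    case True
    then show ?thesis using Cons r ff by (cases w') auto
  next
    case False
    then have "b \<noteq> f (f a)" using ff by simp
    then show ?thesis using Cons by simp
  qed
qed

lemma red_pair: "red f (a # f a # w) = red f w"
  by (simp add: cr_cancel reduced_red)

lemma red_app_red: "red f (u @ red f v) = red f (u @ v)"
  by (induction u) auto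

lemma red_cancel_mid: "red f (u @ [a, f a] @ v) = red f (u @ v)"
proof -
  have "red f (u @ [a, f a] @ v) = red f (u @ red f (a # f a # v))"
    by (simp only: red_app_red append_Cons append_Nil)
  also have "\<dots> = red f (u @ red f v)" by (simp only: red_pair)
  also have "\<dots> = red f (u @ v)" by (rule red_app_red)
  finally show ?thesis .
qed

lemma red_cr_app: "reduced f r \<Longrightarrow> red f (cr f a r @ v) = cr f a (red f (r @ v))"
proof (cases r)
  case Nil then show ?thesis by simp
next
  case (Cons b r')
  assume rr: "reduced f r"
  show ?thesis
  proof (cases "b = f a")
    case True
    then have "cr f a (red f (r @ v)) = cr f a (cr f (f a) (red f (r' @ v)))" using Cons by simp
    also have "\<dots> = red f (r' @ v)" by (rule cr_cancel[OF reduced_red])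
    finally show ?thesis using Cons True by simp
  next
    case False then show ?thesis using Cons by simp
  qed
qed

lemma red_red_app: "red f (red f u @ v) = red f (u @ v)"
proof (induction u)
  case Nil then show ?case by simp
next
  case (Cons a u)
  have "red f (red f (a # u) @ v) = red f (cr f a (red f u) @ v)" by simp
  also have "\<dots> = cr f a (red f (red f u @ v))" by (rule red_cr_app[OF reduced_red])
  also have "\<dots> = red f ((a # u) @ v)" using Cons by simp
  finally show ?case .
qed

lemma red_inv_cancel: "red f (rev (map f x) @ x @ z) = red f z"
proof (induction x)
  case Nil then show ?case by simp
next
  case (Cons a x)
  have "red f (rev (map f (a # x)) @ (a # x) @ z) = red f (rev (map f x) @ [f a, f (f a)] @ x @ z)"
    using ff by simp
  also have "\<dots> = red f (rev (map f x) @ x @ z)" by (rule red_cancel_mid)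
  finally show ?case using Cons by simp
qed

lemma reduced_app: "reduced f u \<Longrightarrow> reduced f v \<Longrightarrow> (u \<noteq> [] \<Longrightarrow> v \<noteq> [] \<Longrightarrow> hd v \<noteq> f (last u))
   \<Longrightarrow> reduced f (u @ v)"
proof (induction u)
  case Nil then show ?case by simp
next
  case (Cons a u)
  show ?case
  proof (cases u)
    case Nil then show ?thesis using Cons.prems by (cases v) auto
  next
    case (Cons b u')
    then have "reduced f (u @ v)" using Cons.IH Cons.prems reduced_tl by auto
    then show ?thesis using Cons Cons.prems by auto
  qed
qed

lemma reduced_rev_map: "reduced f x \<Longrightarrow> reduced f (rev (map f x))"
proof (induction x rule: induct_list012)
  case (3 a b w)
  then have "reduced f (rev (map f (b # w)) @ [f a])"
    by (intro reduced_app) (auto simp: ff simp del: rev_map)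
  then show ?case by simp
qed auto

lemma red_inv_app: "reduced f x \<Longrightarrow> reduced f y \<Longrightarrow>
   red f (rev (map f x) @ y) = rev (map f (drop (lcp x y) x)) @ drop (lcp x y) y"
proof (induction x y rule: lcp.induct)
  case (1 a x b y)
  show ?case
  proof (cases "a = b")
    case True
    have "red f (rev (map f (a # x)) @ b # y) = red f (rev (map f x) @ [f a, f (f a)] @ y)"
      using True ff by simp
    also have "\<dots> = red f (rev (map f x) @ y)" by (rule red_cancel_mid)
    finally show ?thesis using 1 True reduced_tl[of f b x] reduced_tl[of f b y] by auto
  next
    case False
    have "reduced f (rev (map f (a # x)) @ b # y)"
      apply (rule reduced_app)
      using reduced_rev_map[OF "1.prems"(1)] "1.prems"(2) False ff by auto
    then show ?thesis using False by (simp add: red_reduced)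
  qed
next
  case ("2_1" y) then show ?case by (simp add: red_reduced)
next
  case ("2_2" x) then show ?case by (simp add: red_reduced reduced_rev_map del: rev_map)
qed

lemma length_red_inv_app: "reduced f x \<Longrightarrow> reduced f y \<Longrightarrow>
   length (red f (rev (map f x) @ y)) = length x + length y - 2 * lcp x y"
  using red_inv_app lcp_le[of x y] by simp

end


lemma cut_sum:
  fixes c :: "'x \<Rightarrow> complex"
  assumes "finite F" "(\<Sum>x\<in>F. c x) = 0"
  shows "(\<Sum>x\<in>F. \<Sum>y\<in>F. c x * cnj (c y) * (if (x \<in> A) \<noteq> (y \<in> A) then 1 else 0))
         = - 2 * of_real ((cmod (\<Sum>x\<in>F \<inter> A. c x))^2)"
proof -
  define i where "i x = (if x \<in> A then (1::complex) else 0)" for x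
  have k: "(if (x \<in> A) \<noteq> (y \<in> A) then 1 else 0) = i x + i y - 2 * i x * i y" for x y
    by (simp add: i_def)
  define C where "C = (\<Sum>x\<in>F. c x * i x)"
  have CA: "C = (\<Sum>x\<in>F \<inter> A. c x)"
    unfolding C_def i_def using assms(1) by (simp add: sum.inter_restrict if_distrib cong: if_cong)
  have s0: "(\<Sum>y\<in>F. cnj (c y)) = 0" using assms(2)
    by (metis complex_cnj_zero cnj_sum)
  have "(\<Sum>x\<in>F. \<Sum>y\<in>F. c x * cnj (c y) * (if (x \<in> A) \<noteq> (y \<in> A) then 1 else 0))
      = (\<Sum>x\<in>F. \<Sum>y\<in>F. (c x * i x) * cnj (c y) + c x * (cnj (c y) * i y) - 2 * ((c x * i x) * (cnj (c y) * i y)))"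
    unfolding k by (intro sum.cong HOL.refl) (simp add: right_diff_distrib distrib_left mult_ac)
  also have "\<dots> = C * (\<Sum>y\<in>F. cnj (c y)) + (\<Sum>x\<in>F. c x) * (\<Sum>y\<in>F. cnj (c y) * i y)
       - 2 * (C * (\<Sum>y\<in>F. cnj (c y) * i y))"
  proof -
    have e1: "C * (\<Sum>y\<in>F. cnj (c y)) = (\<Sum>x\<in>F. \<Sum>y\<in>F. (c x * i x) * cnj (c y))"
      unfolding C_def by (rule sum_product)
    have e2: "(\<Sum>x\<in>F. c x) * (\<Sum>y\<in>F. cnj (c y) * i y) = (\<Sum>x\<in>F. \<Sum>y\<in>F. c x * (cnj (c y) * i y))"
      by (rule sum_product)
    have e3: "C * (\<Sum>y\<in>F. cnj (c y) * i y) = (\<Sum>x\<in>F. \<Sum>y\<in>F. (c x * i x) * (cnj (c y) * i y))"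
      unfolding C_def by (rule sum_product)
    show ?thesis unfolding e1 e2 e3 by (simp only: sum.distrib sum_subtractf sum_distrib_left)
  qed
  also have "(\<Sum>y\<in>F. cnj (c y) * i y) = cnj C"
    by (simp add: C_def i_def cnj_sum if_distrib cong: if_cong)
  also have "C * cnj C = of_real ((cmod C)^2)"
    by (rule complex_norm_square[symmetric])
  finally show ?thesis using s0 assms(2) CA by simp
qed

definition NP :: "'b list \<Rightarrow> 'b list set" where
  "NP z = (\<lambda>i. take i z) ` {1..length z}"

lemma finite_NP[simp]: "finite (NP z)" by (simp add: NP_def)

lemma card_NP: "card (NP z) = length z"
proof -
  have "inj_on (\<lambda>i. take i z) {1..length z}"
    by (rule inj_onI) (metis atLeastAtMost_iff length_take min.absorb2)
  then show ?thesis by (simp add: NP_def card_image)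
qed

lemma lcp_take: "take (lcp x y) x = take (lcp x y) y"
  by (induction x y rule: lcp.induct) auto

lemma take_eq_lcp: "i \<le> length x \<Longrightarrow> i \<le> length y \<Longrightarrow> take i x = take i y \<Longrightarrow> i \<le> lcp x y"
proof (induction x y arbitrary: i rule: lcp.induct)
  case (1 a x b y)
  show ?case
  proof (cases i)
    case (Suc j) then show ?thesis using 1 by auto
  qed simp
qed auto

lemma NP_inter: "NP x \<inter> NP y = (\<lambda>i. take i x) ` {1..lcp x y}"
proof
  show "NP x \<inter> NP y \<subseteq> (\<lambda>i. take i x) ` {1..lcp x y}"
  proof
    fix w assume "w \<in> NP x \<inter> NP y"
    then obtain i j where i: "1 \<le> i" "i \<le> length x" "w = take i x"
      and j: "1 \<le> j" "j \<le> length y" "w = take j y" by (auto simp: NP_def)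
    then have "i = j" by (metis length_take min.absorb2)
    then have "i \<le> lcp x y" using i j take_eq_lcp by metis
    then show "w \<in> (\<lambda>i. take i x) ` {1..lcp x y}" using i by auto
  qed
next
  show "(\<lambda>i. take i x) ` {1..lcp x y} \<subseteq> NP x \<inter> NP y"
  proof
    fix w assume "w \<in> (\<lambda>i. take i x) ` {1..lcp x y}"
    then obtain i where i: "1 \<le> i" "i \<le> lcp x y" "w = take i x" by auto
    have "take i x = take i y" using lcp_take[of x y] i(2)
      by (metis min.absorb1 take_take)
    then show "w \<in> NP x \<inter> NP y" using i lcp_le[of x y] unfolding NP_def by force
  qed
qed

lemma card_NP_inter: "card (NP x \<inter> NP y) = lcp x y"
proof -
  have "inj_on (\<lambda>i. take i x) {1..lcp x y}"
    using lcp_le[of x y]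
    by (intro inj_onI) (metis atLeastAtMost_iff length_take min.absorb2 order_trans)
  then show ?thesis by (simp add: NP_inter card_image)
qed

lemma kernel_decomp:
  assumes "finite P" "NP x \<subseteq> P" "NP y \<subseteq> P"
  shows "(of_nat (length x + length y - 2 * lcp x y) :: complex)
       = (\<Sum>w\<in>P. if (w \<in> NP x) \<noteq> (w \<in> NP y) then 1 else 0)"
proof -
  have eq: "(if (w \<in> NP x) \<noteq> (w \<in> NP y) then 1 else 0 :: complex)
     = (if w \<in> NP x then 1 else 0) + (if w \<in> NP y then 1 else 0) - 2 * (if w \<in> NP x \<inter> NP y then 1 else 0)" for w
    by auto
  have c: "(\<Sum>w\<in>P. if w \<in> B then 1 else 0 :: complex) = of_nat (card B)" if "B \<subseteq> P" for B
    using that assms(1) by (simp add: sum.If_cases Int_absorb2 Int_commute)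
  have "NP x \<inter> NP y \<subseteq> P" using assms by auto
  have l: "2 * lcp x y \<le> length x + length y" using lcp_le[of x y] by simp
  show ?thesis
    unfolding eq sum_subtractf sum.distrib sum_distrib_left[symmetric]
    using assms c[of "NP x"] c[of "NP y"] c[of "NP x \<inter> NP y"] l \<open>NP x \<inter> NP y \<subseteq> P\<close>
    by (simp add: card_NP card_NP_inter of_nat_diff)
qed

lemma tree_cnd:
  fixes c :: "'x \<Rightarrow> complex" and nfm :: "'x \<Rightarrow> 'b list"
  assumes F: "finite F" "F \<noteq> {}" and inj: "inj_on nfm F" and nz: "\<forall>x\<in>F. c x \<noteq> 0"
    and s: "(\<Sum>x\<in>F. c x) = 0"
  shows "(\<Sum>x\<in>F. \<Sum>y\<in>F. c x * cnj (c y) *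
           of_nat (length (nfm x) + length (nfm y) - 2 * lcp (nfm x) (nfm y))) \<in> \<real>
      \<and> Re (\<Sum>x\<in>F. \<Sum>y\<in>F. c x * cnj (c y) *
           of_nat (length (nfm x) + length (nfm y) - 2 * lcp (nfm x) (nfm y))) < 0"
proof -
  define P where "P = (\<Union>x\<in>F. NP (nfm x))"
  have fP: "finite P" using F by (simp add: P_def)
  define A where "A w = {x. w \<in> NP (nfm x)}" for w
  define Cw where "Cw w = (\<Sum>x\<in>F \<inter> A w. c x)" for w
  have "(\<Sum>x\<in>F. \<Sum>y\<in>F. c x * cnj (c y) *
           of_nat (length (nfm x) + length (nfm y) - 2 * lcp (nfm x) (nfm y)))
     = (\<Sum>x\<in>F. \<Sum>y\<in>F. \<Sum>w\<in>P. c x * cnj (c y) * (if (x \<in> A w) \<noteq> (y \<in> A w) then 1 else 0))"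
  proof (rule sum.cong[OF HOL.refl], rule sum.cong[OF HOL.refl])
    fix x y assume "x \<in> F" "y \<in> F"
    then have "NP (nfm x) \<subseteq> P" "NP (nfm y) \<subseteq> P" by (auto simp: P_def)
    then show "c x * cnj (c y) * of_nat (length (nfm x) + length (nfm y) - 2 * lcp (nfm x) (nfm y))
       = (\<Sum>w\<in>P. c x * cnj (c y) * (if (x \<in> A w) \<noteq> (y \<in> A w) then 1 else 0))"
      by (simp add: kernel_decomp[OF fP] sum_distrib_left A_def)
  qed
  also have "\<dots> = (\<Sum>w\<in>P. \<Sum>x\<in>F. \<Sum>y\<in>F. c x * cnj (c y) * (if (x \<in> A w) \<noteq> (y \<in> A w) then 1 else 0))"
  proof -
    have "(\<Sum>x\<in>F. \<Sum>y\<in>F. \<Sum>w\<in>P. c x * cnj (c y) * (if (x \<in> A w) \<noteq> (y \<in> A w) then 1 else 0))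
       = (\<Sum>x\<in>F. \<Sum>w\<in>P. \<Sum>y\<in>F. c x * cnj (c y) * (if (x \<in> A w) \<noteq> (y \<in> A w) then 1 else 0))"
      by (rule sum.cong[OF HOL.refl], rule sum.swap)
    also have "\<dots> = (\<Sum>w\<in>P. \<Sum>x\<in>F. \<Sum>y\<in>F. c x * cnj (c y) * (if (x \<in> A w) \<noteq> (y \<in> A w) then 1 else 0))"
      by (rule sum.swap)
    finally show ?thesis .
  qed
  also have "\<dots> = (\<Sum>w\<in>P. - 2 * of_real ((cmod (Cw w))^2))"
    unfolding Cw_def by (rule sum.cong[OF HOL.refl], rule cut_sum[OF F(1) s])
  also have "\<dots> = of_real (- 2 * (\<Sum>w\<in>P. (cmod (Cw w))^2))"
    by (simp add: sum_distrib_left)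
  finally have q: "(\<Sum>x\<in>F. \<Sum>y\<in>F. c x * cnj (c y) *
           of_nat (length (nfm x) + length (nfm y) - 2 * lcp (nfm x) (nfm y)))
        = of_real (- 2 * (\<Sum>w\<in>P. (cmod (Cw w))^2))" .
  obtain x0 where x0: "x0 \<in> F" "length (nfm x0) = Max ((\<lambda>x. length (nfm x)) ` F)"
    using F by (metis (no_types, lifting) Max_in finite_imageI image_iff image_is_empty)
  have mx: "\<forall>x\<in>F. length (nfm x) \<le> length (nfm x0)" using x0 F by simp
  have ne: "nfm x0 \<noteq> []"
  proof
    assume e: "nfm x0 = []"
    have eqn: "nfm x = nfm x0" if "x \<in> F" for x using mx that e by auto
    have "x = x0" if "x \<in> F" for x using inj_onD[OF inj, of x x0] eqn[OF that] that x0(1) by blast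
    then have "F = {x0}" using x0(1) by blast
    then show False using s nz by simp
  qed
  have w0P: "nfm x0 \<in> P"
  proof -
    have "nfm x0 = take (length (nfm x0)) (nfm x0)" by simp
    then have "nfm x0 \<in> NP (nfm x0)" unfolding NP_def using ne
      by (metis atLeastAtMost_iff le_refl length_greater_0_conv less_one not_le image_eqI)
    then show ?thesis using x0 by (auto simp: P_def)
  qed
  have "F \<inter> A (nfm x0) = {x0}"
  proof
    show "F \<inter> A (nfm x0) \<subseteq> {x0}"
    proof
      fix x assume "x \<in> F \<inter> A (nfm x0)"
      then obtain i where i: "x \<in> F" "i \<le> length (nfm x)" "nfm x0 = take i (nfm x)"
        by (auto simp: A_def NP_def)
      then have "i = length (nfm x0)" by simp
      then have "nfm x0 = nfm x" using i mx by (metis antisym take_all)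
      then show "x \<in> {x0}" using inj i(1) x0(1) by (auto simp: inj_on_def)
    qed
  next
    have "nfm x0 \<in> NP (nfm x0)" unfolding NP_def using ne
      by (metis atLeastAtMost_iff le_refl length_greater_0_conv less_one not_le image_eqI take_all)
    then show "{x0} \<subseteq> F \<inter> A (nfm x0)" using x0 by (auto simp: A_def)
  qed
  then have "Cw (nfm x0) = c x0" by (simp add: Cw_def)
  then have pos: "(cmod (Cw (nfm x0)))^2 > 0" using nz x0 by simp
  have "(\<Sum>w\<in>P. (cmod (Cw w))^2) > 0"
    using pos w0P fP by (metis (no_types, lifting) sum_pos2 zero_le_power2)
  then show ?thesis unfolding q by simp
qed


lemma set_cr: "set (cr f a w) \<subseteq> insert a (set w)"
  by (cases w) auto

lemma set_red: "set (red f w) \<subseteq> set w"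
proof (induction w)
  case (Cons a w) then show ?case using set_cr[of f a "red f w"] by auto
qed simp

locale freepres = invol f for f :: "'a \<times> bool \<Rightarrow> 'a \<times> bool" +
  fixes S :: "'a set" and R :: "('a word \<times> 'a word) set" and \<kappa> :: "'a \<times> bool \<Rightarrow> 'a \<times> bool"
  assumes kap_inv: "\<And>s b. \<kappa> (s, \<not> b) = f (\<kappa> (s, b))"
    and rel_red: "\<And>l r. (l, r) \<in> R \<Longrightarrow> red f (map \<kappa> l) = red f (map \<kappa> r)"
    and kap_S: "\<And>a. fst a \<in> S \<Longrightarrow> pres_eq R [a] [\<kappa> a]"
    and pair_S: "\<And>a. fst a \<in> S \<Longrightarrow> pres_eq R [\<kappa> a, f (\<kappa> a)] []"
    and fst_kap: "\<And>a. fst (\<kappa> a) = fst a"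
    and fst_f: "\<And>a. fst (f a) = fst a"
begin

definition nf :: "'a word \<Rightarrow> 'a word" where "nf w = red f (map \<kappa> w)"

lemma pe_nf: "pres_eq R u v \<Longrightarrow> nf u = nf v"
proof (induction rule: pres_eq.induct)
  case (cancel u s b v)
  have "map \<kappa> (u @ [(s, b), (s, \<not> b)] @ v) = map \<kappa> u @ [\<kappa> (s, b), f (\<kappa> (s, b))] @ map \<kappa> v"
    by (simp add: kap_inv)
  then show ?case using red_cancel_mid[of "map \<kappa> u" "\<kappa> (s, b)" "map \<kappa> v"] by (simp add: nf_def)
next
  case (rel l r u v)
  have "red f (map \<kappa> u @ map \<kappa> l @ map \<kappa> v) = red f (map \<kappa> u @ red f (red f (map \<kappa> l) @ map \<kappa> v))"
    by (simp add: red_red_app red_app_red)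
  also have "\<dots> = red f (map \<kappa> u @ red f (red f (map \<kappa> r) @ map \<kappa> v))" using rel_red[OF rel] by simp
  also have "\<dots> = red f (map \<kappa> u @ map \<kappa> r @ map \<kappa> v)"
    by (simp add: red_red_app red_app_red)
  finally show ?case by (simp add: nf_def)
qed auto

lemma nf_Cons: "nf (a # u) = cr f (\<kappa> a) (nf u)" by (simp add: nf_def)

lemma nf_pe: "word_over S u \<Longrightarrow> pres_eq R u (nf u)"
proof (induction u)
  case Nil then show ?case by (simp add: nf_def)
next
  case (Cons a u)
  then have h: "pres_eq R ([a] @ u) ([\<kappa> a] @ nf u)" by (intro pe_app kap_S) auto
  show ?case
  proof (cases "nf u")
    case Nil then show ?thesis using h by (simp add: nf_Cons)
  next
    case (Cons b w)
    show ?thesis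
    proof (cases "b = f (\<kappa> a)")
      case True
      have "pres_eq R ([\<kappa> a, f (\<kappa> a)] @ w) ([] @ w)"
        by (rule pe_appR, rule pair_S) (use Cons.prems in simp)
      then show ?thesis using h Cons True by (simp add: nf_Cons) (metis append_Cons append_Nil pe_trans)
    next
      case False then show ?thesis using h Cons by (simp add: nf_Cons)
    qed
  qed
qed

lemma nf_set: "set (nf u) \<subseteq> \<kappa> ` set u"
  unfolding nf_def using set_red by fastforce

lemma nf_over: "word_over S u \<Longrightarrow> word_over S (nf u)"
  using nf_set[of u] fst_kap unfolding word_over_def by fastforce

lemma reduced_nf: "reduced f (nf u)" by (simp add: nf_def reduced_red)

lemma pair_cancel: "set z \<subseteq> \<kappa> ` {a. fst a \<in> S} \<Longrightarrow> pres_eq R (z @ rev (map f z)) []"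
proof (induction z)
  case Nil then show ?case by simp
next
  case (Cons b z)
  then obtain a where a: "fst a \<in> S" "b = \<kappa> a" by auto
  have "pres_eq R ([b] @ (z @ rev (map f z)) @ [f b]) ([b] @ [] @ [f b])"
    using Cons by (intro pe_ctx) auto
  also have "pres_eq R ([b] @ [] @ [f b]) []" using pair_S[OF a(1)] a(2) by simp
  finally show ?case by simp
qed

lemma word_over_rev_f: "word_over S (rev (map f z)) = word_over S z"
  unfolding word_over_def by (simp add: image_image fst_f)

definition dd :: "'a word \<Rightarrow> 'a word \<Rightarrow> nat" where
  "dd x y = length (red f (rev (map f x) @ y))"

lemma wd_eq:
  assumes u: "word_over S u" and v: "word_over S v"
  shows "word_dist R S {w. word_over S w \<and> pres_eq R u w} {w. word_over S w \<and> pres_eq R v w}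
         = dd (nf u) (nf v)"
proof -
  let ?g = "{w. word_over S w \<and> pres_eq R u w}" and ?h = "{w. word_over S w \<and> pres_eq R v w}"
  define x where "x = nf u"
  define y where "y = nf v"
  define p where "p = lcp x y"
  define w0 where "w0 = rev (map f (drop p x)) @ drop p y"
  have rx: "reduced f x" "reduced f y" by (simp_all add: x_def y_def reduced_nf)
  have w0: "red f (rev (map f x) @ y) = w0"
    unfolding w0_def p_def by (rule red_inv_app[OF rx])
  have xg: "x \<in> ?g" using nf_over[OF u] nf_pe[OF u] by (simp add: x_def)
  have yh: "y \<in> ?h" using nf_over[OF v] nf_pe[OF v] by (simp add: y_def)
  have w0o: "word_over S w0"
    using nf_over[OF u] nf_over[OF v] unfolding w0_def x_def y_def
    by (simp add: word_over_rev_f) (metis append_take_drop_id word_over_app)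
  have setx: "set (drop p x) \<subseteq> \<kappa> ` {a. fst a \<in> S}"
    using nf_set[of u] u set_drop_subset[of p x] unfolding x_def word_over_def by fastforce
  have "pres_eq R (x @ w0) (take p x @ (drop p x @ rev (map f (drop p x))) @ drop p y)"
    unfolding w0_def by (metis append.assoc append_take_drop_id pe_refl)
  also have "pres_eq R \<dots> (take p x @ [] @ drop p y)"
    by (rule pe_ctx, rule pair_cancel[OF setx])
  also have "take p x @ [] @ drop p y = y"
    using lcp_take[of x y] unfolding p_def by simp
  finally have xw: "pres_eq R (x @ w0) y" .
  have P0: "\<exists>u'\<in>?g. \<exists>v'\<in>?h. \<exists>w. word_over S w \<and> length w = length w0 \<and> pres_eq R (u' @ w) v'"
    using xg yh w0o xw by blast
  have lower: "length w0 \<le> n" if "\<exists>u'\<in>?g. \<exists>v'\<in>?h. \<exists>w. word_over S w \<and> length w = n \<and> pres_eq R (u' @ w) v'" for n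
  proof -
    from that obtain u' v' w where uv: "u' \<in> ?g" "v' \<in> ?h" "length w = n" "pres_eq R (u' @ w) v'"
      by blast
    have "nf u' = x" using uv(1) pe_nf unfolding x_def by auto
    have "nf v' = y" using uv(2) pe_nf unfolding y_def by auto
    have "y = nf (u' @ w)" using pe_nf[OF uv(4)] \<open>nf v' = y\<close> by simp
    also have "\<dots> = red f (red f (map \<kappa> u') @ map \<kappa> w)" by (simp add: nf_def red_red_app)
    also have "\<dots> = red f (x @ map \<kappa> w)"
      using \<open>nf u' = x\<close> by (simp add: nf_def)
    finally have "red f (rev (map f x) @ y) = red f (rev (map f x) @ x @ map \<kappa> w)"
      by (simp add: red_app_red)
    also have "\<dots> = red f (map \<kappa> w)" by (rule red_inv_cancel)
    finally have "w0 = red f (map \<kappa> w)" using w0 by simp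
    then show ?thesis using length_red[of f "map \<kappa> w"] uv(3) by simp
  qed
  have "word_dist R S ?g ?h = length w0"
    unfolding word_dist_def
    by (rule Least_equality[where P="\<lambda>n. \<exists>u'\<in>?g. \<exists>v'\<in>?h. \<exists>w. word_over S w \<and> length w = n \<and> pres_eq R (u' @ w) v'", OF P0 lower])
  then show ?thesis using w0 unfolding dd_def x_def y_def by simp
qed

end


context freepres
begin

definition repr :: "'a word set \<Rightarrow> 'a word" where
  "repr g = (SOME u. word_over S u \<and> g = {w. word_over S w \<and> pres_eq R u w})"

lemma repr: "g \<in> group_elems R S \<Longrightarrow> word_over S (repr g) \<and> g = {w. word_over S w \<and> pres_eq R (repr g) w}"
  unfolding group_elems_def repr_def by (rule someI_ex) blast

lemma class_eq: "pres_eq R u u' \<Longrightarrow> {w. word_over S w \<and> pres_eq R u w} = {w. word_over S w \<and> pres_eq R u' w}"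
  by (auto intro: pe_trans pe_sym)

theorem free_cnd: "cond_strict_neg_def (group_elems R S) (\<lambda>g h. of_nat (word_dist R S g h))"
  unfolding cond_strict_neg_def_def
proof (intro allI impI)
  fix c :: "'a word set \<Rightarrow> complex"
  assume a: "finite {x. c x \<noteq> 0} \<and> {x. c x \<noteq> 0} \<subseteq> group_elems R S \<and> {x. c x \<noteq> 0} \<noteq> {} \<and>
             (\<Sum>x\<in>{x. c x \<noteq> 0}. c x) = 0"
  define F where "F = {x. c x \<noteq> 0}"
  define nfm where "nfm g = nf (repr g)" for g
  have FX: "F \<subseteq> group_elems R S" using a by (simp add: F_def)
  have wd: "word_dist R S g h = length (nfm g) + length (nfm h) - 2 * lcp (nfm g) (nfm h)"
    if "g \<in> F" "h \<in> F" for g h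
  proof -
    have g: "word_over S (repr g)" "g = {w. word_over S w \<and> pres_eq R (repr g) w}"
      using repr[of g] that FX by auto
    have h: "word_over S (repr h)" "h = {w. word_over S w \<and> pres_eq R (repr h) w}"
      using repr[of h] that FX by auto
    have "word_dist R S g h = dd (nf (repr g)) (nf (repr h))"
      using wd_eq[OF g(1) h(1)] g(2) h(2) by simp
    then show ?thesis unfolding dd_def nfm_def
      by (simp add: length_red_inv_app reduced_nf)
  qed
  have inj: "inj_on nfm F"
  proof (rule inj_onI)
    fix g h assume gh: "g \<in> F" "h \<in> F" "nfm g = nfm h"
    have g: "word_over S (repr g)" "g = {w. word_over S w \<and> pres_eq R (repr g) w}"
      using repr[of g] gh FX by auto
    have h: "word_over S (repr h)" "h = {w. word_over S w \<and> pres_eq R (repr h) w}"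
      using repr[of h] gh FX by auto
    have "pres_eq R (repr g) (repr h)"
      using nf_pe[OF g(1)] nf_pe[OF h(1)] gh(3) unfolding nfm_def by (metis pe_sym pe_trans)
    then show "g = h" using g(2) h(2) class_eq by metis
  qed
  have T: "(\<Sum>x\<in>F. \<Sum>y\<in>F. c x * cnj (c y) *
           of_nat (length (nfm x) + length (nfm y) - 2 * lcp (nfm x) (nfm y))) \<in> \<real>
      \<and> Re (\<Sum>x\<in>F. \<Sum>y\<in>F. c x * cnj (c y) *
           of_nat (length (nfm x) + length (nfm y) - 2 * lcp (nfm x) (nfm y))) < 0"
    by (rule tree_cnd) (use a inj in \<open>auto simp: F_def\<close>)
  have eq: "(\<Sum>x\<in>F. \<Sum>y\<in>F. c x * cnj (c y) * of_nat (word_dist R S x y))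
     = (\<Sum>x\<in>F. \<Sum>y\<in>F. c x * cnj (c y) *
           of_nat (length (nfm x) + length (nfm y) - 2 * lcp (nfm x) (nfm y)))"
    by (intro sum.cong HOL.refl) (simp add: wd)
  show "let q = \<Sum>x\<in>{x. c x \<noteq> 0}. \<Sum>y\<in>{x. c x \<noteq> 0}. c x * cnj (c y) * of_nat (word_dist R S x y)
        in q \<in> \<real> \<and> Re q < 0"
    using T eq unfolding F_def Let_def by simp
qed

end


lemma length_alt[simp]: "length (alt s t n) = n"
  by (induction n arbitrary: s t) auto

lemma alt_add: "alt s t (i + j) = alt s t i @ (if even i then alt s t j else alt t s j)"
  by (induction i arbitrary: s t) auto

lemma alt_nth: "i < n \<Longrightarrow> alt s t n ! i = (if even i then (s, True) else (t, True))"
  by (induction n arbitrary: s t i) (auto simp: nth_Cons split: nat.splits)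

lemma take_alt: "i \<le> n \<Longrightarrow> take i (alt s t n) = alt s t i"
  by (induction n arbitrary: s t i) (auto simp: take_Cons split: nat.splits)

lemma rev_alt: "rev (alt s t n) = (if odd n then alt s t n else alt t s n)"
proof (induction n arbitrary: s t)
  case (Suc n)
  have "alt s t (Suc n) = alt s t n @ (if even n then alt s t 1 else alt t s 1)"
    using alt_add[of s t n 1] by simp
  then show ?case using Suc[of s t] by auto
qed simp

lemma word_over_alt: "s \<in> S \<Longrightarrow> t \<in> S \<Longrightarrow> word_over S (alt s t n)"
  by (induction n arbitrary: s t) auto

definition pos :: "'a word \<Rightarrow> 'a word" where "pos w = map (\<lambda>a. (fst a, True)) w"

lemma pos_alt[simp]: "pos (alt s t n) = alt s t n"
  by (induction n arbitrary: s t) (auto simp: pos_def)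

lemma pos_winv: "pos (winv w) = rev (pos w)"
  by (simp add: pos_def winv_def rev_map)

fun rf :: "'a word \<Rightarrow> 'a word list" where
  "rf [] = []"
| "rf (a # w) = [(fst a, True)] # map (\<lambda>t. [a] @ t @ [il a]) (rf w)"

definition conj :: "'a word \<Rightarrow> 'a word \<Rightarrow> 'a word" where "conj u t = u @ t @ winv u"

lemma length_rf[simp]: "length (rf w) = length w"
  by (induction w) auto

lemma rf_app: "rf (u @ w) = rf u @ map (conj u) (rf w)"
  by (induction u) (auto simp: conj_def)

lemma rf_nth: "i < length w \<Longrightarrow> rf w ! i = take i w @ [(fst (w ! i), True)] @ winv (take i w)"
proof (induction w arbitrary: i)
  case (Cons a w)
  then show ?case by (cases i) auto
qed simp

locale cox = fixes S :: "'a set" and m :: "'a \<Rightarrow> 'a \<Rightarrow> enat"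
begin

abbreviation CR where "CR \<equiv> coxeter_rels S m"
abbreviation peq (infix "\<approx>" 50) where "x \<approx> y \<equiv> pres_eq CR x y"

lemma ss: "s \<in> S \<Longrightarrow> [(s, True), (s, True)] \<approx> []"
  using pres_eq.rel[of "[(s, True), (s, True)]" "[]" CR "[]" "[]"]
  by (simp add: coxeter_rels_def)

lemma sF: "s \<in> S \<Longrightarrow> [(s, b)] \<approx> [(s, True)]"
proof (cases b)
  case False
  assume s: "s \<in> S"
  have "[(s, False)] @ [] \<approx> [(s, False)] @ [(s, True), (s, True)]"
    by (rule pe_appL, rule pe_sym, rule ss[OF s])
  also have "[(s, False)] @ [(s, True), (s, True)] = [] @ [(s, False), (s, \<not> False)] @ [(s, True)]" by simp
  also have "\<dots> \<approx> [] @ [(s, True)]" by (rule pres_eq.cancel)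
  finally show ?thesis using False by simp
qed simp

lemma pos_pe: "word_over S w \<Longrightarrow> w \<approx> pos w"
proof (induction w)
  case Nil then show ?case by (simp add: pos_def)
next
  case (Cons a w)
  then have "[a] @ w \<approx> [(fst a, True)] @ pos w"
    using sF[of "fst a" "snd a"] by (intro pe_app) auto
  then show ?case by (simp add: pos_def)
qed

lemma winv_alt: "s \<in> S \<Longrightarrow> t \<in> S \<Longrightarrow> winv (alt s t n) \<approx> rev (alt s t n)"
  using pos_pe[of "winv (alt s t n)"] word_over_alt[of s S t n] by (simp add: pos_winv)

lemma alt_rel: "s \<in> S \<Longrightarrow> t \<in> S \<Longrightarrow> s \<noteq> t \<Longrightarrow> m s t = enat k \<Longrightarrow> alt s t k \<approx> alt t s k"
  using pres_eq.rel[of "alt s t k" "alt t s k" CR "[]" "[]"]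
  by (auto simp: coxeter_rels_def artin_rels_def)

lemma pe_cancel_right: "x @ u \<approx> y @ u \<Longrightarrow> x \<approx> y"
proof -
  assume h: "x @ u \<approx> y @ u"
  have "x \<approx> x @ u @ winv u" using pe_appL[OF pe_sym[OF pe_rinv[of CR u]], of x] by simp
  also have "x @ u @ winv u \<approx> y @ u @ winv u" using pe_appR[OF h, of "winv u"] by simp
  also have "y @ u @ winv u \<approx> y" using pe_appL[OF pe_rinv[of CR u], of y] by simp
  finally show ?thesis .
qed

definition cnt :: "'a word \<Rightarrow> 'a word \<Rightarrow> nat" where
  "cnt w z = length (filter (\<lambda>t. t \<approx> z) (rf w))"

lemma conj_iff: "conj u t \<approx> z \<longleftrightarrow> t \<approx> conj (winv u) z"
proof
  assume h: "conj u t \<approx> z"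
  have "t \<approx> winv u @ (u @ t @ winv u) @ u"
  proof -
    have "t \<approx> (winv u @ u) @ t @ (winv u @ u)"
      using pe_app[OF pe_sym[OF pe_linv[of CR u]] pe_app[OF pe_refl[of CR t] pe_sym[OF pe_linv[of CR u]]]]
      by simp
    then show ?thesis by simp
  qed
  also have "\<dots> \<approx> winv u @ z @ u" using pe_ctx[OF h[unfolded conj_def]] .
  finally show "t \<approx> conj (winv u) z" by (simp add: conj_def)
next
  assume h: "t \<approx> conj (winv u) z"
  have "conj u t \<approx> u @ (winv u @ z @ u) @ winv u"
    using pe_ctx[OF h[unfolded conj_def]] by (simp add: conj_def)
  also have "u @ (winv u @ z @ u) @ winv u = (u @ winv u) @ z @ (u @ winv u)" by simp
  also have "\<dots> \<approx> [] @ z @ []"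
    using pe_app[OF pe_rinv[of CR u] pe_app[OF pe_refl[of CR z] pe_rinv[of CR u]]] by simp
  finally show "conj u t \<approx> z" by simp
qed

lemma cnt_split: "cnt (u @ x @ v) z = cnt u z + cnt x (conj (winv u) z)
    + length (filter (\<lambda>t. conj (u @ x) t \<approx> z) (rf v))"
proof -
  have r: "rf (u @ x @ v) = rf u @ map (conj u) (rf x) @ map (conj (u @ x)) (rf v)"
    by (simp add: rf_app conj_def)
  have m: "filter (\<lambda>t. conj u t \<approx> z) (rf x) = filter (\<lambda>t. t \<approx> conj (winv u) z) (rf x)"
    by (rule filter_cong[OF HOL.refl]) (rule conj_iff)
  have "cnt (u @ x @ v) z = length (filter (\<lambda>t. t \<approx> z) (rf u)) + length (filter (\<lambda>t. conj u t \<approx> z) (rf x))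
    + length (filter (\<lambda>t. conj (u @ x) t \<approx> z) (rf v))"
    unfolding cnt_def r filter_append length_append filter_map length_map o_def by simp
  then show ?thesis unfolding m cnt_def .
qed

lemma conj_cong: "x \<approx> y \<Longrightarrow> conj (u @ x) t \<approx> conj (u @ y) t"
proof -
  assume xy: "x \<approx> y"
  have "winv (u @ x) \<approx> winv (u @ y)" by (rule pe_inv, rule pe_appL[OF xy])
  then show ?thesis unfolding conj_def by (rule pe_app[OF pe_appL[OF xy] pe_appL])
qed

lemma cnt_ctx:
  assumes xy: "x \<approx> y" and e: "\<And>z. even (cnt x z) = even (cnt y z)"
  shows "even (cnt (u @ x @ v) z) = even (cnt (u @ y @ v) z)"
proof -
  have "filter (\<lambda>t. conj (u @ x) t \<approx> z) (rf v) = filter (\<lambda>t. conj (u @ y) t \<approx> z) (rf v)"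
    by (intro filter_cong HOL.refl) (meson pe_trans pe_sym conj_cong[OF xy])
  then show ?thesis using e[of "conj (winv u) z"] by (simp add: cnt_split)
qed

lemma cnt_two:
  assumes "rf x = [t1, t2]" "t1 \<approx> t2"
  shows "even (cnt x z)"
proof (cases "t1 \<approx> z")
  case True
  then have "t2 \<approx> z" using assms(2) by (meson pe_trans pe_sym)
  then show ?thesis using True by (simp add: cnt_def assms(1))
next
  case False
  then have "\<not> t2 \<approx> z" using assms(2) by (meson pe_trans)
  then show ?thesis using False by (simp add: cnt_def assms(1))
qed

lemma three_cancel: "[(s, b), (s, True), (s, \<not> b)] \<approx> [(s, True)]"
proof (cases b)
  case True
  have "[(s, True)] @ [(s, True), (s, \<not> True)] @ [] \<approx> [(s, True)] @ []" by (rule pres_eq.cancel)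
  then show ?thesis using True by simp
next
  case False
  have "[] @ [(s, False), (s, \<not> False)] @ [(s, True)] \<approx> [] @ [(s, True)]" by (rule pres_eq.cancel)
  then show ?thesis using False by simp
qed

lemma cnt_cancel: "even (cnt [(s, b), (s, \<not> b)] z)"
proof -
  have "rf [(s, b), (s, \<not> b)] = [[(s, True)], [(s, b), (s, True), (s, \<not> b)]]" by (simp add: il_def)
  then show ?thesis by (rule cnt_two) (rule pe_sym, rule three_cancel)
qed

lemma cnt_ss: "even (cnt [(s, True), (s, True)] z)"
  using cnt_cancel[of s True z] by (simp add: cnt_def il_def)

lemma rf_alt_eq: "i < k \<Longrightarrow> rf (alt s t k) ! i = alt s t i @ [(if even i then s else t, True)] @ winv (alt s t i)"
  by (simp add: rf_nth take_alt alt_nth)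

lemma alt_odd: "alt s t (2 * i + 1) = alt s t i @ [(if even i then s else t, True)] @ rev (alt s t i)"
  using alt_add[of s t i "Suc i"] rev_alt[of s t i] by (auto simp: mult_2)

lemma rf_alt: "s \<in> S \<Longrightarrow> t \<in> S \<Longrightarrow> i < k \<Longrightarrow> rf (alt s t k) ! i \<approx> alt s t (2 * i + 1)"
  unfolding rf_alt_eq alt_odd by (intro pe_appL winv_alt) auto

lemma alt_pal: "s \<in> S \<Longrightarrow> t \<in> S \<Longrightarrow> i < k \<Longrightarrow> alt s t k \<approx> alt t s k \<Longrightarrow>
   alt s t (2 * i + 1) \<approx> alt t s (2 * (k - 1 - i) + 1)"
proof -
  assume st: "s \<in> S" "t \<in> S" and ik: "i < k" and r: "alt s t k \<approx> alt t s k"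
  define a where "a = alt s t (2 * i + 1)"
  define b where "b = alt t s (2 * (k - 1 - i) + 1)"
  have "a @ b = alt s t (2 * i + 1 + (2 * (k - 1 - i) + 1))"
    unfolding a_def b_def alt_add[of s t "2 * i + 1"] by simp
  also have "2 * i + 1 + (2 * (k - 1 - i) + 1) = k + k" using ik by simp
  also have "alt s t (k + k) = alt s t k @ rev (alt t s k)"
    unfolding alt_add rev_alt by simp
  finally have ab: "a @ b = alt s t k @ rev (alt t s k)" .
  have "alt s t k @ rev (alt t s k) \<approx> alt t s k @ winv (alt t s k)"
    by (rule pe_app[OF r pe_sym[OF winv_alt[OF st(2) st(1)]]])
  also have "\<dots> \<approx> []" by (rule pe_rinv)
  finally have ab0: "a @ b \<approx> []" using ab by simp
  have wb: "winv b \<approx> b"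
    using winv_alt[OF st(2) st(1), of "2 * (k - 1 - i) + 1"] rev_alt[of t s "2 * (k - 1 - i) + 1"]
    by (simp add: b_def)
  have "a \<approx> a @ b @ winv b" using pe_appL[OF pe_sym[OF pe_rinv[of CR b]], of a] by simp
  also have "\<dots> = (a @ b) @ winv b" by simp
  also have "\<dots> \<approx> [] @ winv b" by (rule pe_appR[OF ab0])
  also have "\<dots> \<approx> b" using wb by simp
  finally show ?thesis by (simp add: a_def b_def)
qed

lemma filter_len_eq:
  assumes "length xs = length ys" "\<And>i. i < length xs \<Longrightarrow> P (xs ! i) = P (ys ! i)"
  shows "length (filter P xs) = length (filter P ys)"
  using assms by (auto simp: length_filter_conv_card intro!: arg_cong[where f=card])

lemma cnt_alt:
  assumes st: "s \<in> S" "t \<in> S" and r: "alt s t k \<approx> alt t s k"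
  shows "cnt (alt s t k) z = cnt (alt t s k) z"
proof -
  have "length (filter (\<lambda>t. t \<approx> z) (rf (alt s t k))) = length (filter (\<lambda>t. t \<approx> z) (rev (rf (alt t s k))))"
  proof (rule filter_len_eq)
    fix i assume i: "i < length (rf (alt s t k))"
    then have ik: "i < k" by simp
    have e1: "rf (alt s t k) ! i \<approx> alt s t (2 * i + 1)" by (rule rf_alt[OF st ik])
    have "rev (rf (alt t s k)) ! i = rf (alt t s k) ! (k - 1 - i)" using ik by (simp add: rev_nth)
    moreover have "rf (alt t s k) ! (k - 1 - i) \<approx> alt t s (2 * (k - 1 - i) + 1)"
      using ik by (intro rf_alt[OF st(2) st(1)]) auto
    moreover have "alt s t (2 * i + 1) \<approx> alt t s (2 * (k - 1 - i) + 1)"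
      by (rule alt_pal[OF st ik r])
    ultimately have "rf (alt s t k) ! i \<approx> rev (rf (alt t s k)) ! i"
      using e1 by (metis pe_trans pe_sym)
    then show "(rf (alt s t k) ! i \<approx> z) = (rev (rf (alt t s k)) ! i \<approx> z)"
      by (meson pe_trans pe_sym)
  qed simp
  then show ?thesis by (simp add: cnt_def rev_filter[symmetric])
qed

lemma cnt_inv: "x \<approx> y \<Longrightarrow> even (cnt x z) = even (cnt y z)"
proof (induction arbitrary: z rule: pres_eq.induct)
  case (refl w) then show ?case by simp
next
  case (sym a b) then show ?case by simp
next
  case (trans a b c) then show ?case by simp
next
  case (cancel u s b v)
  have "[(s, b), (s, \<not> b)] \<approx> []" using pres_eq.cancel[of CR "[]" s b "[]"] by simp
  moreover have "even (cnt [(s, b), (s, \<not> b)] z) = even (cnt [] z)" for z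
    using cnt_cancel[of s b z] by (simp add: cnt_def)
  ultimately have "even (cnt (u @ [(s, b), (s, \<not> b)] @ v) z) = even (cnt (u @ [] @ v) z)"
    by (rule cnt_ctx)
  then show ?case by simp
next
  case (rel l r u v)
  have lr: "l \<approx> r" using pres_eq.rel[OF rel, of "[]" "[]"] by simp
  have "even (cnt l z) = even (cnt r z)" for z
  proof -
    from rel consider (ss) s where "s \<in> S" "l = [(s, True), (s, True)]" "r = []"
      | (al) s t k where "s \<in> S" "t \<in> S" "l = alt s t k" "r = alt t s k"
      unfolding coxeter_rels_def artin_rels_def by blast
    then show ?thesis
    proof cases
      case ss then show ?thesis using cnt_ss[of s z] by (simp add: cnt_def)
    next
      case al then show ?thesis using cnt_alt[of s t k z] lr by simp
    qed
  qed
  then show ?case by (rule cnt_ctx[OF lr])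
qed

lemma len_lower:
  assumes st: "s \<in> S" "t \<in> S" and r: "alt s t k \<approx> alt t s k"
    and dist: "\<And>i j. i < j \<Longrightarrow> j < k \<Longrightarrow> \<not> alt s t (2 * i + 1) \<approx> alt s t (2 * j + 1)"
    and w: "w \<approx> alt s t k"
  shows "k \<le> length w"
proof -
  define z where "z i = alt s t (2 * i + 1)" for i
  have dz: "i < k \<Longrightarrow> j < k \<Longrightarrow> z i \<approx> z j \<Longrightarrow> i = j" for i j
    using dist[of i j] dist[of j i] unfolding z_def by (metis linorder_neqE_nat pe_sym)
  have c1: "cnt (alt s t k) (z i) = 1" if ik: "i < k" for i
  proof -
    have "{j. j < length (rf (alt s t k)) \<and> rf (alt s t k) ! j \<approx> z i} = {i}"
    proof (intro set_eqI iffI)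
      fix j assume "j \<in> {j. j < length (rf (alt s t k)) \<and> rf (alt s t k) ! j \<approx> z i}"
      then have j: "j < k" "rf (alt s t k) ! j \<approx> z i" by auto
      then have "z j \<approx> z i" using rf_alt[OF st j(1)] unfolding z_def by (meson pe_trans pe_sym)
      then show "j \<in> {i}" using dz j(1) ik by auto
    next
      fix j assume "j \<in> {i}"
      then show "j \<in> {j. j < length (rf (alt s t k)) \<and> rf (alt s t k) ! j \<approx> z i}"
        using rf_alt[OF st ik] ik by (simp add: z_def)
    qed
    then show ?thesis by (simp add: cnt_def length_filter_conv_card)
  qed
  have ex: "\<exists>j. j < length w \<and> rf w ! j \<approx> z i" if ik: "i < k" for i
  proof -
    have "odd (cnt w (z i))" using cnt_inv[OF w, of "z i"] c1[OF ik] by simp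
    then have "cnt w (z i) \<noteq> 0" by (intro notI) simp
    then have "{j. j < length (rf w) \<and> rf w ! j \<approx> z i} \<noteq> {}"
      by (simp add: cnt_def length_filter_conv_card del: length_rf)
    then show ?thesis by auto
  qed
  define J where "J i = (SOME j. j < length w \<and> rf w ! j \<approx> z i)" for i
  have J: "J i < length w \<and> rf w ! J i \<approx> z i" if "i < k" for i
    unfolding J_def by (rule someI_ex[OF ex[OF that]])
  have "inj_on J {..<k}"
  proof (rule inj_onI)
    fix i i' assume "i \<in> {..<k}" "i' \<in> {..<k}" "J i = J i'"
    then have "z i \<approx> z i'" using J[of i] J[of i'] by (metis lessThan_iff pe_trans pe_sym)
    then show "i = i'" using dz \<open>i \<in> {..<k}\<close> \<open>i' \<in> {..<k}\<close> by auto
  qed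
  moreover have "J ` {..<k} \<subseteq> {..<length w}" using J by auto
  ultimately have "card {..<k} \<le> card {..<length w}" by (metis card_inj_on_le finite_lessThan)
  then show ?thesis by simp
qed

end


definition Mm :: "real \<Rightarrow> real \<times> real \<Rightarrow> real \<times> real" where
  "Mm c z = (- fst z - 2 * c * snd z, 2 * c * fst z + (4 * c^2 - 1) * snd z)"

lemma Mm_lin: "Mm c (A * p - B * x, A * q - B * y)
   = (A * fst (Mm c (p, q)) - B * fst (Mm c (x, y)), A * snd (Mm c (p, q)) - B * snd (Mm c (x, y)))"
  by (simp add: Mm_def algebra_simps)

lemma MM: "Mm c (Mm c (x, y)) = ((4 * c^2 - 2) * fst (Mm c (x, y)) - x, (4 * c^2 - 2) * snd (Mm c (x, y)) - y)"
  by (simp add: Mm_def algebra_simps power2_eq_square)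

lemma sin_rec: "sin ((real j + 1) * p) = 2 * cos p * sin (real j * p) - sin ((real j - 1) * p)"
proof -
  have "sin (real j * p + p) + sin (real j * p - p) = 2 * sin (real j * p) * cos p"
    by (simp add: sin_add sin_diff)
  then show ?thesis by (simp add: algebra_simps)
qed

lemma cheb:
  assumes s: "sin p \<noteq> 0" and c: "cos p = 2 * c^2 - 1"
  shows "(Mm c ^^ j) (x, y) =
     (sin (real j * p) / sin p * fst (Mm c (x, y)) - sin ((real j - 1) * p) / sin p * x,
      sin (real j * p) / sin p * snd (Mm c (x, y)) - sin ((real j - 1) * p) / sin p * y)"
proof (induction j)
  case 0
  have "sin ((0 - 1) * p) / sin p = -1" using s by simp
  then show ?case by simp
next
  case (Suc j)
  define A where "A = sin (real j * p) / sin p"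
  define B where "B = sin ((real j - 1) * p) / sin p"
  have rs: "real (Suc j) = real j + 1" by simp
  have e0: "sin (real (Suc j) * p) = (4 * c^2 - 2) * sin (real j * p) - sin ((real j - 1) * p)"
    unfolding rs using sin_rec[of j p, unfolded c] by (simp add: algebra_simps)
  have e: "sin (real (Suc j) * p) / sin p = (4 * c^2 - 2) * A - B"
    unfolding A_def B_def e0 by (simp add: diff_divide_distrib)
  have e2: "sin ((real (Suc j) - 1) * p) / sin p = A" by (simp add: A_def)
  have "(Mm c ^^ Suc j) (x, y) = Mm c ((Mm c ^^ j) (x, y))" by simp
  also have "\<dots> = Mm c (A * fst (Mm c (x, y)) - B * x, A * snd (Mm c (x, y)) - B * y)"
    using Suc by (simp add: A_def B_def)
  also have "\<dots> = (A * fst (Mm c (Mm c (x, y))) - B * fst (Mm c (x, y)),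
                   A * snd (Mm c (Mm c (x, y))) - B * snd (Mm c (x, y)))"
    by (metis Mm_lin prod.collapse)
  also have "\<dots> = (((4 * c^2 - 2) * A - B) * fst (Mm c (x, y)) - A * x,
                   ((4 * c^2 - 2) * A - B) * snd (Mm c (x, y)) - A * y)"
    unfolding MM by (simp add: algebra_simps)
  finally show ?case unfolding e e2 .
qed

lemma cpos: assumes "(n::nat) \<ge> 2" shows "cos (pi / n) \<ge> 0" "cos (pi / n) < 1"
    "cos (2 * pi / n) = 2 * (cos (pi / n))^2 - 1"
proof -
  have n: "real n \<ge> 2" using assms by simp
  have p0: "0 < pi / n" using n by simp
  have p1: "pi / n \<le> pi / 2" by (rule divide_left_mono) (use n in auto)
  show "cos (pi / n) \<ge> 0" using p0 p1 by (intro cos_ge_zero) auto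
  have "pi / n < pi" using p1 pi_gt_zero by linarith
  then have "sin (pi / n) > 0" using p0 by (intro sin_gt_zero) auto
  then have "(cos (pi / n))^2 < 1" using sin_cos_squared_add[of "pi / n"] by (smt (verit) zero_less_power)
  then show "cos (pi / n) < 1" by (smt (verit) one_le_power)
  show "cos (2 * pi / n) = 2 * (cos (pi / n))^2 - 1"
    using cos_double_cos[of "pi / n"] by (simp add: times_divide_eq_right)
qed

lemma Mm_pow_n:
  assumes "(n::nat) \<ge> 2"
  shows "(Mm (cos (pi / n)) ^^ n) (x, y) = (x, y)"
proof (cases "n = 2")
  case True
  then show ?thesis by (simp add: Mm_def numeral_2_eq_2)
next
  case False
  then have n3: "real n \<ge> 3" using assms by simp
  define p where "p = 2 * pi / n"
  have p0: "0 < p" "p < pi" using n3 by (auto simp: p_def field_simps)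
  have s: "sin p \<noteq> 0" using sin_gt_zero[OF p0] by simp
  have c: "cos p = 2 * (cos (pi / n))^2 - 1" using cpos(3)[OF assms] by (simp add: p_def)
  have "real n * p = 2 * pi" using n3 by (simp add: p_def)
  then have s1: "sin (real n * p) = 0" by simp
  have "(real n - 1) * p = 2 * pi - p" using \<open>real n * p = 2 * pi\<close> by (simp add: algebra_simps)
  then have s2: "sin ((real n - 1) * p) / sin p = -1" using s by (simp add: sin_diff)
  show ?thesis unfolding cheb[OF s c] s1 s2 by simp
qed

lemma Mm_pow_ne:
  assumes k: "(k::nat) \<ge> 2" and d: "0 < d" "d < k"
  shows "(Mm (cos (pi / k)) ^^ d) (1, - cos (pi / k)) \<noteq> (1, - cos (pi / k))"
proof (cases "k = 2")
  case True
  then have "d = 1" using d by simp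
  then show ?thesis using True by (simp add: Mm_def)
next
  case False
  then have k3: "real k \<ge> 3" using k by simp
  define c where "c = cos (pi / k)"
  have c0: "c > 0" unfolding c_def using k3 by (intro cos_gt_zero) (auto simp: field_simps)
  have c1: "c < 1" unfolding c_def using cpos[OF k] by simp
  define p where "p = 2 * pi / k"
  have p0: "0 < p" "p < pi" using k3 by (auto simp: p_def field_simps)
  have sp: "sin p > 0" using sin_gt_zero[OF p0] by simp
  have cc: "cos p = 2 * c^2 - 1" using cpos(3)[OF k] by (simp add: p_def c_def)
  show ?thesis
  proof
    assume h: "(Mm (cos (pi / k)) ^^ d) (1, - cos (pi / k)) = (1, - cos (pi / k))"
    define U where "U = sin (real d * p) / sin p"
    define V where "V = sin ((real d - 1) * p) / sin p"
    have hh: "(Mm c ^^ d) (1, - c) = (U * fst (Mm c (1, - c)) - V * 1, U * snd (Mm c (1, - c)) - V * (- c))"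
      unfolding U_def V_def by (rule cheb) (use sp cc in auto)
    have mc: "Mm c (1, - c) = (2 * c^2 - 1, 3 * c - 4 * c^3)"
      by (simp add: Mm_def power2_eq_square power3_eq_cube algebra_simps)
    have "(U * (2 * c^2 - 1) - V, U * (3 * c - 4 * c^3) + V * c) = (1, - c)"
      using h hh mc unfolding c_def[symmetric] by simp
    then have e1: "U * (2 * c^2 - 1) - V = 1" and e2: "U * (3 * c - 4 * c^3) + V * c = - c" by auto
    have "U * (2 * c * (1 - c^2)) = 0"
    proof -
      have "c * (U * (2 * c^2 - 1) - V) + (U * (3 * c - 4 * c^3) + V * c) = c * 1 + - c"
        using e1 e2 by simp
      then show ?thesis by (simp add: algebra_simps power2_eq_square power3_eq_cube)
    qed
    moreover have "2 * c * (1 - c^2) \<noteq> 0"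
    proof -
      have "c * c < 1 * 1" by (rule mult_strict_mono) (use c0 c1 in auto)
      then have "1 - c^2 > 0" by (simp add: power2_eq_square)
      then show ?thesis using c0 by simp
    qed
    ultimately have U0: "U = 0" by simp
    then have V: "V = -1" using e1 by simp
    have "sin (real d * p) = 0" using U0 sp by (simp add: U_def)
    then obtain i :: int where i: "real d * p = i * pi" using sin_zero_iff_int2 by blast
    have "0 < real d * p" using d p0 by simp
    moreover have "real d * p < 2 * pi" using d k3 by (simp add: p_def field_simps)
    ultimately have a: "0 < real_of_int i * pi" "real_of_int i * pi < 2 * pi" using i by auto
    have "0 < real_of_int i" using a(1) pi_gt_zero by (simp add: zero_less_mult_iff)
    moreover have "real_of_int i < 2" using a(2) pi_gt_zero by simp
    ultimately have "i = 1" by linarith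
    then have "(real d - 1) * p = pi - p" using i by (simp add: algebra_simps)
    then have "V = 1" using sp by (simp add: V_def)
    then show False using V by simp
  qed
qed


locale geo = cox S m for S :: "'a set" and m +
  assumes fin: "finite S" and cm: "coxeter_matrix S m"
begin

definition cc :: "'a \<Rightarrow> 'a \<Rightarrow> real" where
  "cc r q = (if r = q then 1 else (case m r q of enat n \<Rightarrow> - cos (pi / real n) | \<infinity> \<Rightarrow> -1))"

definition Bf :: "'a \<Rightarrow> ('a \<Rightarrow> real) \<Rightarrow> real" where
  "Bf r v = (\<Sum>q\<in>S. cc r q * v q)"

definition al :: "'a \<Rightarrow> 'a \<Rightarrow> real" where
  "al r = (\<lambda>x. if x = r then 1 else 0)"

definition sg :: "'a \<Rightarrow> ('a \<Rightarrow> real) \<Rightarrow> ('a \<Rightarrow> real)" where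
  "sg r v = (if r \<in> S then (\<lambda>x. v x + (- 2 * Bf r v) * al r x) else v)"

definition act :: "'a word \<Rightarrow> ('a \<Rightarrow> real) \<Rightarrow> ('a \<Rightarrow> real)" where
  "act w v = foldr (\<lambda>a u. sg (fst a) u) w v"

lemma Bf_add: "q \<in> S \<Longrightarrow> Bf r (\<lambda>x. v x + a * al q x) = Bf r v + a * cc r q"
proof -
  assume q: "q \<in> S"
  have "Bf r (\<lambda>x. v x + a * al q x) = Bf r v + (\<Sum>q'\<in>S. a * (cc r q' * al q q'))"
    unfolding Bf_def by (simp add: sum.distrib distrib_left mult_ac sum_distrib_left)
  also have "(\<Sum>q'\<in>S. a * (cc r q' * al q q')) = a * cc r q"
    using q fin by (simp add: al_def if_distrib cong: if_cong)
  finally show ?thesis .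
qed

lemma cc_self: "cc r r = 1" by (simp add: cc_def)

lemma sg_sg: "sg r (sg r v) = v"
proof (cases "r \<in> S")
  case True
  have "Bf r (sg r v) = Bf r v + (- 2 * Bf r v) * cc r r"
    unfolding sg_def using True by (simp only: if_True) (rule Bf_add[OF True])
  then have "Bf r (sg r v) = - Bf r v" by (simp add: cc_self)
  then show ?thesis using True by (simp add: sg_def fun_eq_iff)
qed (simp add: sg_def)

lemma act_Nil[simp]: "act [] v = v" by (simp add: act_def)
lemma act_Cons[simp]: "act (a # w) v = sg (fst a) (act w v)" by (simp add: act_def)
lemma act_app: "act (u @ w) v = act u (act w v)" by (simp add: act_def)

lemma act_rev: "act (rev w) (act w v) = v"
proof (induction w arbitrary: v)
  case (Cons a w)
  then show ?case by (simp add: act_app sg_sg)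
qed simp

lemma cc_sym: "r \<in> S \<Longrightarrow> q \<in> S \<Longrightarrow> cc r q = cc q r"
  using cm unfolding coxeter_matrix_def cc_def by auto

lemma cc_fin: "r \<in> S \<Longrightarrow> q \<in> S \<Longrightarrow> r \<noteq> q \<Longrightarrow> m r q = enat n \<Longrightarrow> cc r q = - cos (pi / real n)"
  by (simp add: cc_def)

lemma pow_step:
  assumes r: "r \<in> S" "r' \<in> S" "r \<noteq> r'" and n: "m r r' = enat n"
  shows "\<exists>p q. act (alt r r' (2 * j)) v = (\<lambda>x. v x + p * al r x + q * al r' x)
     \<and> (Bf r (act (alt r r' (2 * j)) v), Bf r' (act (alt r r' (2 * j)) v)) = (Mm (cos (pi / real n)) ^^ j) (Bf r v, Bf r' v)"
proof (induction j)
  case 0 then show ?case by (intro exI[of _ 0]) auto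
next
  case (Suc j)
  define c where "c = cos (pi / real n)"
  have n': "m r' r = enat n" using cm n r unfolding coxeter_matrix_def by auto
  have c1: "cc r r' = - c" "cc r' r = - c" using cc_fin[OF r n] cc_fin[OF r(2) r(1) r(3)[symmetric] n'] by (auto simp: c_def)
  from Suc obtain p q where pq: "act (alt r r' (2 * j)) v = (\<lambda>x. v x + p * al r x + q * al r' x)"
    and co: "(Bf r (act (alt r r' (2 * j)) v), Bf r' (act (alt r r' (2 * j)) v)) = (Mm c ^^ j) (Bf r v, Bf r' v)"
    by (auto simp: c_def)
  define u where "u = act (alt r r' (2 * j)) v"
  define x where "x = Bf r u"
  define y where "y = Bf r' u"
  have a2: "alt r r' (2 * Suc j) = (r, True) # (r', True) # alt r r' (2 * j)" by simp
  define u1 where "u1 = sg r' u"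
  have u1: "u1 = (\<lambda>z. u z + (- 2 * y) * al r' z)" using r by (simp add: u1_def sg_def y_def)
  have x1: "Bf r u1 = x + 2 * c * y"
    using Bf_add[OF r(2), of r u "- 2 * y"] c1 unfolding u1 x_def by simp
  have y1: "Bf r' u1 = - y"
    using Bf_add[OF r(2), of r' u "- 2 * y"] cc_self unfolding u1 y_def by simp
  define u2 where "u2 = sg r u1"
  have u2: "u2 = (\<lambda>z. u1 z + (- 2 * (x + 2 * c * y)) * al r z)" using r x1 by (simp add: u2_def sg_def)
  have x2: "Bf r u2 = - (x + 2 * c * y)"
    using Bf_add[OF r(1), of r u1 "- 2 * (x + 2 * c * y)"] x1 cc_self unfolding u2 by simp
  have y2: "Bf r' u2 = - y + 2 * c * (x + 2 * c * y)"
    using Bf_add[OF r(1), of r' u1 "- 2 * (x + 2 * c * y)"] y1 c1 unfolding u2 by (simp add: algebra_simps)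
  have act2: "act (alt r r' (2 * Suc j)) v = u2" by (simp add: a2 u2_def u1_def u_def)
  have "u2 = (\<lambda>z. v z + (p - 2 * (x + 2 * c * y)) * al r z + (q - 2 * y) * al r' z)"
    unfolding u2 u1 u_def pq by (simp add: fun_eq_iff algebra_simps)
  moreover have "(Bf r u2, Bf r' u2) = (Mm c ^^ Suc j) (Bf r v, Bf r' v)"
  proof -
    have xy: "(Mm c ^^ j) (Bf r v, Bf r' v) = (x, y)" unfolding x_def y_def u_def co[symmetric] ..
    have ms: "(Mm c ^^ Suc j) (Bf r v, Bf r' v) = Mm c (x, y)" by (simp only: funpow.simps o_apply xy)
    show ?thesis unfolding x2 y2 ms by (simp add: Mm_def algebra_simps power2_eq_square)
  qed
  ultimately show ?case unfolding act2 c_def by blast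
qed

lemma Bf_lin2: "r1 \<in> S \<Longrightarrow> r2 \<in> S \<Longrightarrow> Bf r (\<lambda>x. v x + p * al r1 x + q * al r2 x) = Bf r v + p * cc r r1 + q * cc r r2"
  using Bf_add[of r2 r "\<lambda>x. v x + p * al r1 x" q] Bf_add[of r1 r v p] by simp

lemma act_2n:
  assumes r: "r \<in> S" "r' \<in> S" "r \<noteq> r'" and n: "m r r' = enat n"
  shows "act (alt r r' (2 * n)) v = v"
proof -
  define c where "c = cos (pi / real n)"
  have n2: "n \<ge> 2" using cm r n unfolding coxeter_matrix_def by (metis enat_ord_simps(1) numeral_eq_enat)
  have n': "m r' r = enat n" using cm n r unfolding coxeter_matrix_def by auto
  have c1: "cc r r' = - c" "cc r' r = - c" using cc_fin[OF r n] cc_fin[OF r(2) r(1) r(3)[symmetric] n'] by (auto simp: c_def)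
  obtain p q where pq: "act (alt r r' (2 * n)) v = (\<lambda>x. v x + p * al r x + q * al r' x)"
    and co: "(Bf r (act (alt r r' (2 * n)) v), Bf r' (act (alt r r' (2 * n)) v)) = (Mm c ^^ n) (Bf r v, Bf r' v)"
    using pow_step[OF r n, of n v] by (auto simp: c_def)
  have "(Mm c ^^ n) (Bf r v, Bf r' v) = (Bf r v, Bf r' v)" unfolding c_def by (rule Mm_pow_n[OF n2])
  then have h: "Bf r (act (alt r r' (2 * n)) v) = Bf r v" "Bf r' (act (alt r r' (2 * n)) v) = Bf r' v"
    using co by simp_all
  have b1: "Bf r (act (alt r r' (2 * n)) v) = Bf r v + p - c * q"
    unfolding pq Bf_lin2[OF r(1) r(2)] c1 cc_self by simp
  have b2: "Bf r' (act (alt r r' (2 * n)) v) = Bf r' v - c * p + q"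
    unfolding pq Bf_lin2[OF r(1) r(2)] c1 cc_self by simp
  have e: "p - c * q = 0" "q - c * p = 0" using h b1 b2 by linarith+
  have "c \<ge> 0" "c < 1" using cpos[OF n2] by (auto simp: c_def)
  then have "c * c < 1 * 1" by (intro mult_strict_mono) auto
  moreover have "q * (1 - c * c) = 0" using e by (simp add: algebra_simps)
  ultimately have "q = 0" by simp
  then have "p = 0" using e by simp
  then show ?thesis using pq \<open>q = 0\<close> by simp
qed

lemma act_alt:
  assumes r: "r \<in> S" "r' \<in> S" "r \<noteq> r'" and n: "m r r' = enat n"
  shows "act (alt r r' n) v = act (alt r' r n) v"
proof -
  have w: "alt r r' (2 * n) = alt r r' n @ rev (alt r' r n)"
    unfolding mult_2 alt_add rev_alt by simp
  have "act (alt r r' n) v = act (alt r r' n) (act (rev (alt r' r n)) (act (alt r' r n) v))"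
    by (simp add: act_rev)
  also have "\<dots> = act (alt r r' (2 * n)) (act (alt r' r n) v)" by (simp add: w act_app)
  also have "\<dots> = act (alt r' r n) v" by (rule act_2n[OF r n])
  finally show ?thesis .
qed

lemma act_pe: "x \<approx> y \<Longrightarrow> act x v = act y v"
proof (induction arbitrary: v rule: pres_eq.induct)
  case (cancel u s b w) then show ?case by (simp add: act_app sg_sg)
next
  case (rel l r u w)
  have "act l v' = act r v'" for v'
  proof -
    from rel consider (ss) s where "s \<in> S" "l = [(s, True), (s, True)]" "r = []"
      | (al) s t k where "s \<in> S" "t \<in> S" "s \<noteq> t" "m s t = enat k" "l = alt s t k" "r = alt t s k"
      unfolding coxeter_rels_def artin_rels_def by blast
    then show ?thesis
    proof cases
      case ss then show ?thesis by (simp add: sg_sg)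
    next
      case al then show ?thesis using act_alt by simp
    qed
  qed
  then show ?case by (simp add: act_app)
qed auto

lemma alt_order:
  assumes r: "s \<in> S" "t \<in> S" "s \<noteq> t" and k: "m s t = enat k" and d: "0 < d" "d < k"
  shows "\<not> alt s t (2 * d) \<approx> []"
proof
  assume h: "alt s t (2 * d) \<approx> []"
  define c where "c = cos (pi / real k)"
  have k2: "k \<ge> 2" using cm r k unfolding coxeter_matrix_def by (metis enat_ord_simps(1) numeral_eq_enat)
  have k': "m t s = enat k" using cm k r unfolding coxeter_matrix_def by auto
  have c1: "cc t s = - c" using cc_fin[OF r(2) r(1) r(3)[symmetric] k'] by (auto simp: c_def)
  obtain p q where pq: "act (alt s t (2 * d)) (al s) = (\<lambda>x. al s x + p * al s x + q * al t x)"
    and co: "(Bf s (act (alt s t (2 * d)) (al s)), Bf t (act (alt s t (2 * d)) (al s))) = (Mm c ^^ d) (Bf s (al s), Bf t (al s))"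
    using pow_step[OF r k, of d "al s"] by (auto simp: c_def)
  have a1: "Bf s (al s) = 1" "Bf t (al s) = - c"
    using Bf_add[OF r(1), of s "\<lambda>x. 0" 1] Bf_add[OF r(1), of t "\<lambda>x. 0" 1] c1 cc_self
    by (simp_all add: Bf_def)
  have "act (alt s t (2 * d)) (al s) = al s" using act_pe[OF h] by simp
  then have "(Mm c ^^ d) (1, - c) = (1, - c)" using co a1 by simp
  then show False using Mm_pow_ne[OF k2 d] by (simp add: c_def)
qed

lemma alt_distinct:
  assumes r: "s \<in> S" "t \<in> S" "s \<noteq> t" and k: "m s t = enat k" and ij: "i < j" "j < k"
  shows "\<not> alt s t (2 * i + 1) \<approx> alt s t (2 * j + 1)"
proof
  assume h: "alt s t (2 * i + 1) \<approx> alt s t (2 * j + 1)"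
  have "alt s t (2 * j + 1) = alt s t (2 * (j - i)) @ alt s t (2 * i + 1)"
    using alt_add[of s t "2 * (j - i)" "2 * i + 1"] ij by (simp add: algebra_simps)
  then have "[] @ alt s t (2 * i + 1) \<approx> alt s t (2 * (j - i)) @ alt s t (2 * i + 1)" using h by simp
  then have "alt s t (2 * (j - i)) \<approx> []" by (metis pe_cancel_right pe_sym)
  then show False using alt_order[OF r k, of "j - i"] ij by simp
qed

lemma len_alt:
  assumes r: "s \<in> S" "t \<in> S" "s \<noteq> t" and k: "m s t = enat k" and w: "w \<approx> alt s t k"
  shows "k \<le> length w"
  by (rule len_lower[OF r(1) r(2) alt_rel[OF r k] _ w]) (rule alt_distinct[OF r k])

end


definition cls :: "('a word \<times> 'a word) set \<Rightarrow> 'a set \<Rightarrow> 'a word \<Rightarrow> 'a word set" where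
  "cls R S u = {w. word_over S w \<and> pres_eq R u w}"

lemma cls_in: "word_over S u \<Longrightarrow> cls R S u \<in> group_elems R S"
  unfolding cls_def group_elems_def by blast

lemma wd_ex: "word_over S u \<Longrightarrow> word_over S v \<Longrightarrow>
   \<exists>u'\<in>cls R S u. \<exists>v'\<in>cls R S v. \<exists>w. word_over S w \<and> length w = length (winv u @ v) \<and> pres_eq R (u' @ w) v'"
proof -
  assume u: "word_over S u" and v: "word_over S v"
  have "pres_eq R (u @ (winv u @ v)) ([] @ v)"
    using pe_appR[OF pe_rinv[of R u], of v] by simp
  moreover have "u \<in> cls R S u" "v \<in> cls R S v" using u v by (auto simp: cls_def)
  moreover have "word_over S (winv u @ v)" using u v by simp
  ultimately show ?thesis by (metis append_Nil)
qed

lemma wd_le: "word_over S u \<Longrightarrow> word_over S v \<Longrightarrow> word_over S w \<Longrightarrow> pres_eq R (u @ w) v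
   \<Longrightarrow> word_dist R S (cls R S u) (cls R S v) \<le> length w"
proof -
  assume a: "word_over S u" "word_over S v" "word_over S w" "pres_eq R (u @ w) v"
  have "u \<in> cls R S u" "v \<in> cls R S v" using a by (auto simp: cls_def)
  then show ?thesis unfolding word_dist_def by (intro Least_le) (use a in blast)
qed

lemma wd_ge:
  assumes u: "word_over S u" and v: "word_over S v"
    and h: "\<And>u' v' w. pres_eq R u u' \<Longrightarrow> pres_eq R v v' \<Longrightarrow> word_over S w \<Longrightarrow> pres_eq R (u' @ w) v' \<Longrightarrow> n \<le> length w"
  shows "n \<le> word_dist R S (cls R S u) (cls R S v)"
proof -
  let ?P = "\<lambda>n. \<exists>u'\<in>cls R S u. \<exists>v'\<in>cls R S v. \<exists>w. word_over S w \<and> length w = n \<and> pres_eq R (u' @ w) v'"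
  have "?P (Least ?P)" by (rule LeastI_ex) (use wd_ex[OF u v] in blast)
  then obtain u' v' w where w: "u' \<in> cls R S u" "v' \<in> cls R S v" "word_over S w" "length w = Least ?P"
    "pres_eq R (u' @ w) v'" by blast
  have "pres_eq R u u'" "pres_eq R v v'" using w(1,2) by (auto simp: cls_def)
  then have "n \<le> length w" by (rule h[OF _ _ w(3) w(5)])
  then show ?thesis using w(4) by (simp add: word_dist_def)
qed

lemma wd_sym:
  "word_dist R S (cls R S u) (cls R S v) = word_dist R S (cls R S v) (cls R S u)"
proof -
  have "(\<exists>u'\<in>cls R S u. \<exists>v'\<in>cls R S v. \<exists>w. word_over S w \<and> length w = n \<and> pres_eq R (u' @ w) v')
    \<longleftrightarrow> (\<exists>u'\<in>cls R S v. \<exists>v'\<in>cls R S u. \<exists>w. word_over S w \<and> length w = n \<and> pres_eq R (u' @ w) v')"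
    (is "?A u v \<longleftrightarrow> ?A v u") for n
  proof -
    have *: "?A u v \<Longrightarrow> ?A v u" for u v
    proof -
      assume "?A u v"
      then obtain u' v' w where h: "u' \<in> cls R S u" "v' \<in> cls R S v" "word_over S w" "length w = n"
        "pres_eq R (u' @ w) v'" by blast
      have "pres_eq R (v' @ winv w) (u' @ w @ winv w)"
        using pe_appR[OF pe_sym[OF h(5)], of "winv w"] by simp
      also have "pres_eq R (u' @ w @ winv w) (u' @ [])" by (rule pe_appL, rule pe_rinv)
      finally show "?A v u" using h by (intro bexI[OF _ h(2)] bexI[OF _ h(1)] exI[of _ "winv w"]) auto
    qed
    show ?thesis using *[of u v] *[of v u] by blast
  qed
  then show ?thesis unfolding word_dist_def by simp
qed

lemma wd_self: "word_over S u \<Longrightarrow> word_dist R S (cls R S u) (cls R S u) = 0"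
  using wd_le[of S u u "[]" R] by simp

context geo
begin

lemma counter:
  assumes R1: "artin_rels S m \<subseteq> R" and R2: "R \<subseteq> coxeter_rels S m"
    and st: "s \<in> S" "t \<in> S" "s \<noteq> t" and k: "m s t = enat k"
  shows "\<not> cond_strict_neg_def (group_elems R S) (\<lambda>g h. of_nat (word_dist R S g h))"
proof
  assume H: "cond_strict_neg_def (group_elems R S) (\<lambda>g h. of_nat (word_dist R S g h))"
  have k2: "k \<ge> 2" using cm st k unfolding coxeter_matrix_def by (metis enat_ord_simps(1) numeral_eq_enat)
  define D where "D x y = word_dist R S x y" for x y
  define ue where "ue = ([] :: 'a word)"
  define ua where "ua = [(s, True)]"
  define ub where "ub = alt s t k"
  define uv where "uv = alt t s (k - 1)"
  have ov: "word_over S ue" "word_over S ua" "word_over S ub" "word_over S uv"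
    using st by (auto simp: ue_def ua_def ub_def uv_def word_over_alt)
  define e where "e = cls R S ue"
  define a where "a = cls R S ua"
  define b where "b = cls R S ub"
  define v where "v = cls R S uv"
  have mono: "pres_eq R x y \<Longrightarrow> x \<approx> y" for x y by (rule pe_mono[OF _ R2])
  have kk: "k = Suc (k - 1)" using k2 by simp
  have ab: "ua @ uv = ub" unfolding ua_def uv_def ub_def by (subst (2) kk) simp
  have Deb: "k \<le> D e b" unfolding D_def e_def b_def
  proof (rule wd_ge[OF ov(1) ov(3)])
    fix u' v' w assume h: "pres_eq R ue u'" "pres_eq R ub v'" "word_over S w" "pres_eq R (u' @ w) v'"
    have "w \<approx> u' @ w" using pe_appR[OF mono[OF h(1)], of w] by (simp add: ue_def)
    also have "\<dots> \<approx> v'" using mono[OF h(4)] .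
    also have "v' \<approx> ub" using mono[OF h(2)] by (rule pe_sym)
    finally show "k \<le> length w" by (rule len_alt[OF st k, folded ub_def])
  qed
  have Dav: "k \<le> D a v" unfolding D_def a_def v_def
  proof (rule wd_ge[OF ov(2) ov(4)])
    fix u' v' w assume h: "pres_eq R ua u'" "pres_eq R uv v'" "word_over S w" "pres_eq R (u' @ w) v'"
    have "ua @ w \<approx> u' @ w" using pe_appR[OF mono[OF h(1)], of w] .
    also have "\<dots> \<approx> v'" using mono[OF h(4)] .
    also have "v' \<approx> uv" using mono[OF h(2)] by (rule pe_sym)
    finally have "w \<approx> winv ua @ uv" by (rule pe_move)
    also have "winv ua @ uv \<approx> ua @ uv"
      unfolding ua_def using pe_appR[OF sF[OF st(1), of False], of uv] by (simp add: il_def)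
    finally show "k \<le> length w" using ab by (intro len_alt[OF st k]) (simp add: ub_def)
  qed
  have Dea: "D e a \<le> 1" unfolding D_def e_def a_def
    using wd_le[OF ov(1) ov(2), of ua R] ov by (simp add: ue_def ua_def)
  have Dev: "D e v \<le> k - 1" unfolding D_def e_def v_def
    using wd_le[OF ov(1) ov(4), of uv R] ov by (simp add: ue_def uv_def)
  have Dab: "D a b \<le> k - 1" unfolding D_def a_def b_def
    using wd_le[OF ov(2) ov(3), of uv R] ov ab by (simp add: uv_def)
  have Dbv: "D b v \<le> 1"
  proof -
    define x where "x = (if even (k - 1) then (t, True) else (s, True))"
    have ts: "alt t s k = uv @ [x]"
    proof -
      have "alt t s k = alt t s ((k - 1) + 1)" using k2 by simp
      also have "\<dots> = uv @ [x]" unfolding alt_add uv_def x_def by simp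
      finally show ?thesis .
    qed
    have "pres_eq R ub (alt t s k)"
      unfolding ub_def using pres_eq.rel[of "alt s t k" "alt t s k" R "[]" "[]"] R1 st k
      by (auto simp: artin_rels_def)
    then have "pres_eq R (ub @ [il x]) (uv @ [x, il x])" using ts pe_appR by fastforce
    also have "pres_eq R (uv @ [x, il x]) (uv @ [])" by (rule pe_appL, rule pe_cancel1)
    finally have "pres_eq R (ub @ [il x]) uv" by simp
    then show ?thesis unfolding D_def b_def v_def
      using wd_le[OF ov(3) ov(4), of "[il x]" R] st by (simp add: x_def il_def)
  qed
  have sym: "D x y = D y x" if "x \<in> {e, a, b, v}" "y \<in> {e, a, b, v}" for x y
    using that unfolding D_def e_def a_def b_def v_def by (auto intro: wd_sym)
  have self: "D x x = 0" if "x \<in> {e, a, b, v}" for x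
    using that ov unfolding D_def e_def a_def b_def v_def by (auto intro: wd_self)
  have ne: "e \<noteq> a" "e \<noteq> b" "e \<noteq> v" "a \<noteq> b" "a \<noteq> v" "b \<noteq> v"
  proof -
    show "e \<noteq> a" using Deb Dab k2 by auto
    show "e \<noteq> b" using Deb k2 self[of e] by auto
    show "e \<noteq> v" using Dav Dea sym[of a e] k2 by auto
    show "a \<noteq> b" using Deb Dea k2 by auto
    show "a \<noteq> v" using Dav k2 self[of a] by auto
    show "b \<noteq> v" using Dav Dab k2 by auto
  qed
  define cr where "cr g = (if g = e \<or> g = b then 1 else if g = a \<or> g = v then -1 else (0::real))" for g
  define c where "c g = complex_of_real (cr g)" for g
  have supp: "{x. c x \<noteq> 0} = {e, a, b, v}" using ne by (auto simp: c_def cr_def)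
  have inX: "{e, a, b, v} \<subseteq> group_elems R S"
    using ov unfolding e_def a_def b_def v_def by (auto intro: cls_in)
  have sum0: "(\<Sum>x\<in>{e, a, b, v}. c x) = 0" using ne by (simp add: c_def cr_def)
  have f4: "finite {x. c x \<noteq> 0} \<and> {x. c x \<noteq> 0} \<subseteq> group_elems R S \<and> {x. c x \<noteq> 0} \<noteq> {}
     \<and> (\<Sum>x\<in>{x. c x \<noteq> 0}. c x) = 0" unfolding supp using inX sum0 by simp
  have "let q = (\<Sum>x\<in>{x. c x \<noteq> 0}. \<Sum>y\<in>{x. c x \<noteq> 0}. c x * cnj (c y) * of_nat (word_dist R S x y))
       in q \<in> \<real> \<and> Re q < 0"
    using H f4 unfolding cond_strict_neg_def_def by blast
  then have neg: "Re (\<Sum>x\<in>{e, a, b, v}. \<Sum>y\<in>{e, a, b, v}. c x * cnj (c y) * of_nat (D x y)) < 0"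
    unfolding supp D_def Let_def by simp
  have "Re (\<Sum>x\<in>{e, a, b, v}. \<Sum>y\<in>{e, a, b, v}. c x * cnj (c y) * of_nat (D x y))
      = (\<Sum>x\<in>{e, a, b, v}. \<Sum>y\<in>{e, a, b, v}. cr x * cr y * real (D x y))"
    by (simp add: c_def)
  also have "\<dots> = 2 * (- real (D e a) + real (D e b) - real (D e v) - real (D a b) + real (D a v) - real (D b v))"
    using ne sym[of a e] sym[of b e] sym[of v e] sym[of b a] sym[of v a] sym[of v b]
      self[of e] self[of a] self[of b] self[of v]
    by (simp add: cr_def)
  finally have "Re (\<Sum>x\<in>{e, a, b, v}. \<Sum>y\<in>{e, a, b, v}. c x * cnj (c y) * of_nat (D x y)) \<ge> 0"
    using Deb Dav Dea Dev Dab Dbv k2 by (simp add: of_nat_diff)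
  then show False using neg by simp
qed

end


theorem theorem2:
  fixes S :: "'a set" and m :: "'a \<Rightarrow> 'a \<Rightarrow> enat"
  assumes "finite S" and "coxeter_matrix S m"
  shows "(cond_strict_neg_def (group_elems (coxeter_rels S m) S)
            (\<lambda>g h. of_nat (word_dist (coxeter_rels S m) S g h))
          \<longleftrightarrow> (\<forall>s\<in>S. \<forall>t\<in>S. s \<noteq> t \<longrightarrow> m s t = \<infinity>))
       \<and> (cond_strict_neg_def (group_elems (artin_rels S m) S)
            (\<lambda>g h. of_nat (word_dist (artin_rels S m) S g h))
          \<longleftrightarrow> (\<forall>s\<in>S. \<forall>t\<in>S. s \<noteq> t \<longrightarrow> m s t = \<infinity>))"
proof -
  interpret geo S m by unfold_locales (use assms in auto)
  let ?P = "\<forall>s\<in>S. \<forall>t\<in>S. s \<noteq> t \<longrightarrow> m s t = \<infinity>"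
  have free: "cond_strict_neg_def (group_elems (coxeter_rels S m) S)
            (\<lambda>g h. of_nat (word_dist (coxeter_rels S m) S g h))
       \<and> cond_strict_neg_def (group_elems (artin_rels S m) S)
            (\<lambda>g h. of_nat (word_dist (artin_rels S m) S g h))" if P: ?P
  proof
    have A0: "artin_rels S m = {}" using P by (auto simp: artin_rels_def)
    have k1: "red id (map (\<lambda>a. (fst a, True)) l) = red id (map (\<lambda>a. (fst a, True)) r)"
      if "(l, r) \<in> coxeter_rels S m" for l r
      using that A0 by (auto simp: coxeter_rels_def)
    have k2: "pres_eq (coxeter_rels S m) [a] [(fst a, True)]" if "fst a \<in> S" for a :: "'a \<times> bool"
      using that sF[of "fst a" "snd a"] by simp
    have k3: "pres_eq (coxeter_rels S m) [(fst a, True), (fst a, True)] []" if "fst a \<in> S" for a :: "'a \<times> bool"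
      using that ss[of "fst a"] by simp
    interpret C: freepres id S "coxeter_rels S m" "\<lambda>a. (fst a, True)"
      by unfold_locales (use k1 k2 k3 in auto)
    show "cond_strict_neg_def (group_elems (coxeter_rels S m) S)
            (\<lambda>g h. of_nat (word_dist (coxeter_rels S m) S g h))" by (rule C.free_cnd)
    interpret A: freepres il S "{}" id
    proof unfold_locales
      fix a :: "'a \<times> bool"
      show "pres_eq {} [id a, il (id a)] []" using pe_cancel1[of "{}" a] by simp
    qed (auto simp: il_def)
    show "cond_strict_neg_def (group_elems (artin_rels S m) S)
            (\<lambda>g h. of_nat (word_dist (artin_rels S m) S g h))" unfolding A0 by (rule A.free_cnd)
  qed
  have nfree: "\<not> cond_strict_neg_def (group_elems (coxeter_rels S m) S)
            (\<lambda>g h. of_nat (word_dist (coxeter_rels S m) S g h))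
       \<and> \<not> cond_strict_neg_def (group_elems (artin_rels S m) S)
            (\<lambda>g h. of_nat (word_dist (artin_rels S m) S g h))" if nP: "\<not> ?P"
  proof -
    from nP obtain s t where st: "s \<in> S" "t \<in> S" "s \<noteq> t" "m s t \<noteq> \<infinity>" by blast
    then obtain k where k: "m s t = enat k" by (cases "m s t") auto
    show ?thesis
    proof
      show "\<not> cond_strict_neg_def (group_elems (coxeter_rels S m) S)
            (\<lambda>g h. of_nat (word_dist (coxeter_rels S m) S g h))"
        by (rule counter[OF _ _ st(1-3) k]) (auto simp: coxeter_rels_def)
      show "\<not> cond_strict_neg_def (group_elems (artin_rels S m) S)
            (\<lambda>g h. of_nat (word_dist (artin_rels S m) S g h))"
        by (rule counter[OF _ _ st(1-3) k]) (auto simp: coxeter_rels_def)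
    qed
  qed
  show ?thesis using free nfree by blast
qed


end
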